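(* Let $q:G'\to G$ be an epimorphism of groups with finite abelian kernel $\Gamma$, let $W$ be a closed connected oriented surface of positive genus with $\pi=\pi_1(W)$ and first Betti number $b=2-\chi(W)$, and let $g:\pi\to G$ be an epimorphism. Then $g$ lifts to $G'$ (i.e. there is a homomorphism $g':\pi\to G'$ with $qg'=g$) if and only if $g_*([W])\in H_2(G;\mathbb{Z})$ lies in the image of $q_*:H_2(G';\mathbb{Z})\to H_2(G;\mathbb{Z})$. Moreover, if $g$ lifts to $G'$, then $$|\mathrm{Hom}_g(\pi,G')|=|\Gamma|^b\,|[\Gamma,G']|^{-1}.$$
   Context: $[W]\in H_2(W;\mathbb{Z})=H_2(\pi;\mathbb{Z})$ is the fundamental class. $\mathrm{Hom}_g(\pi,G')$ is the set of homomorphisms $g':\pi\to G'$ with $qg'=g$. $[\Gamma,G']$ is the subgroup of $\Gamma$ generated by commutators of elements of $\Gamma$ with elements of $G'$. *)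

theory Defs
  imports "HOL-Algebra.Algebra"
begin

definition grp_comm :: "('a, 'm) monoid_scheme \<Rightarrow> 'a \<Rightarrow> 'a \<Rightarrow> 'a" where
  "grp_comm G a b = a \<otimes>\<^bsub>G\<^esub> b \<otimes>\<^bsub>G\<^esub> inv\<^bsub>G\<^esub> a \<otimes>\<^bsub>G\<^esub> inv\<^bsub>G\<^esub> b"

fun surf_rel :: "('a, 'm) monoid_scheme \<Rightarrow> (nat \<Rightarrow> 'a) \<Rightarrow> (nat \<Rightarrow> 'a) \<Rightarrow> nat \<Rightarrow> 'a" where
  "surf_rel G x y 0 = \<one>\<^bsub>G\<^esub>"
| "surf_rel G x y (Suc n) = surf_rel G x y n \<otimes>\<^bsub>G\<^esub> grp_comm G (x n) (y n)"

text \<open>The fundamental group of the closed oriented surface W of genus h is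
  pi = < a_0,b_0,...,a_(h-1),b_(h-1) | [a_0,b_0]...[a_(h-1),b_(h-1)] >.
  A homomorphism pi -> G is thus the same as the tuple (x,y) of images of the
  generators, subject to the surface relation.\<close>
definition surf_hom :: "('a, 'm) monoid_scheme \<Rightarrow> nat \<Rightarrow> ((nat \<Rightarrow> 'a) \<times> (nat \<Rightarrow> 'a)) set" where
  "surf_hom G h = {(x, y). x \<in> {..<h} \<rightarrow>\<^sub>E carrier G \<and> y \<in> {..<h} \<rightarrow>\<^sub>E carrier G
                           \<and> surf_rel G x y h = \<one>\<^bsub>G\<^esub>}"

definition surf_epi :: "('a, 'm) monoid_scheme \<Rightarrow> nat \<Rightarrow> (nat \<Rightarrow> 'a) \<Rightarrow> (nat \<Rightarrow> 'a) \<Rightarrow> bool" where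
  "surf_epi G h x y \<longleftrightarrow> (x, y) \<in> surf_hom G h \<and>
      generate G (x ` {..<h} \<union> y ` {..<h}) = carrier G"

definition lifts :: "('b, 'n) monoid_scheme \<Rightarrow> ('b \<Rightarrow> 'a) \<Rightarrow> nat \<Rightarrow> (nat \<Rightarrow> 'a) \<Rightarrow> (nat \<Rightarrow> 'a)
                      \<Rightarrow> ((nat \<Rightarrow> 'b) \<times> (nat \<Rightarrow> 'b)) set" where
  "lifts G' q h x y = {(x', y') \<in> surf_hom G' h. \<forall>i<h. q (x' i) = x i \<and> q (y' i) = y i}"

definition comm_subgroup :: "('a, 'm) monoid_scheme \<Rightarrow> 'a set \<Rightarrow> 'a set" where
  "comm_subgroup G A = generate G {grp_comm G a b | a b. a \<in> A \<and> b \<in> carrier G}"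

section \<open>Integral group homology in degree 2 via the (inhomogeneous) bar complex\<close>

definition supp :: "('x \<Rightarrow> int) \<Rightarrow> 'x set" where
  "supp c = {p. c p \<noteq> 0}"

definition chains2 :: "('a, 'm) monoid_scheme \<Rightarrow> ('a \<times> 'a \<Rightarrow> int) set" where
  "chains2 G = {c. finite (supp c) \<and> supp c \<subseteq> carrier G \<times> carrier G}"

definition chains3 :: "('a, 'm) monoid_scheme \<Rightarrow> ('a \<times> 'a \<times> 'a \<Rightarrow> int) set" where
  "chains3 G = {c. finite (supp c) \<and> supp c \<subseteq> carrier G \<times> carrier G \<times> carrier G}"

definition bd2 :: "('a, 'm) monoid_scheme \<Rightarrow> ('a \<times> 'a \<Rightarrow> int) \<Rightarrow> ('a \<Rightarrow> int)" where
  "bd2 G c = (\<lambda>z. \<Sum>p\<in>supp c. c p *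
      (of_bool (snd p = z) - of_bool (fst p \<otimes>\<^bsub>G\<^esub> snd p = z) + of_bool (fst p = z)))"

definition bd3 :: "('a, 'm) monoid_scheme \<Rightarrow> ('a \<times> 'a \<times> 'a \<Rightarrow> int) \<Rightarrow> ('a \<times> 'a \<Rightarrow> int)" where
  "bd3 G e = (\<lambda>z. \<Sum>t\<in>supp e. e t *
      (case t of (a, b, c) \<Rightarrow>
         of_bool ((b, c) = z) - of_bool ((a \<otimes>\<^bsub>G\<^esub> b, c) = z)
       + of_bool ((a, b \<otimes>\<^bsub>G\<^esub> c) = z) - of_bool ((a, b) = z)))"

definition cycles2 :: "('a, 'm) monoid_scheme \<Rightarrow> ('a \<times> 'a \<Rightarrow> int) set" where
  "cycles2 G = {c \<in> chains2 G. bd2 G c = (\<lambda>_. 0)}"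

definition push2 :: "('b \<Rightarrow> 'a) \<Rightarrow> ('b \<times> 'b \<Rightarrow> int) \<Rightarrow> ('a \<times> 'a \<Rightarrow> int)" where
  "push2 f c = (\<lambda>z. \<Sum>p\<in>{p \<in> supp c. (f (fst p), f (snd p)) = z}. c p)"

definition in_image_H2 :: "('b, 'n) monoid_scheme \<Rightarrow> ('a, 'm) monoid_scheme \<Rightarrow> ('b \<Rightarrow> 'a)
                            \<Rightarrow> ('a \<times> 'a \<Rightarrow> int) \<Rightarrow> bool" where
  "in_image_H2 G' G q z \<longleftrightarrow>
     (\<exists>c' \<in> cycles2 G'. \<exists>e \<in> chains3 G. (\<lambda>p. z p - push2 q c' p) = bd3 G e)"

text \<open>g_#(fundamental cycle of W), written in terms of the images x_i, y_i of the
  standard generators a_i, b_i. This is the Fox-calculus 2-cycle of the relator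
  w_1...w_(4h) = prod [a_i,b_i]: a letter w_k = s contributes (p_(k-1), s), a letter
  w_k = s^-1 contributes -(p_k, s), where p_k = w_1...w_k. Its class is [W].\<close>
definition surf_cycle :: "('a, 'm) monoid_scheme \<Rightarrow> (nat \<Rightarrow> 'a) \<Rightarrow> (nat \<Rightarrow> 'a) \<Rightarrow> nat
                           \<Rightarrow> ('a \<times> 'a \<Rightarrow> int)" where
  "surf_cycle G x y h = (\<lambda>p. \<Sum>i<h.
      let P = surf_rel G x y i; a = x i; b = y i in
        of_bool (p = (P, a))
      + of_bool (p = (P \<otimes>\<^bsub>G\<^esub> a, b))
      - of_bool (p = (P \<otimes>\<^bsub>G\<^esub> a \<otimes>\<^bsub>G\<^esub> b \<otimes>\<^bsub>G\<^esub> inv\<^bsub>G\<^esub> a, a))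
      - of_bool (p = (surf_rel G x y (Suc i), b)))"

end

theory Submission
  imports Defs "HOL-Algebra.Product_Groups"
begin

definition Phi :: "('c,'d) monoid_scheme \<Rightarrow> ('x \<Rightarrow> 'c) \<Rightarrow> ('x \<Rightarrow> int) \<Rightarrow> 'c" where
  "Phi Q w c = finprod Q (\<lambda>p. w p [^]\<^bsub>Q\<^esub> c p) (supp c)"

context comm_group begin

lemma Phi_superset:
  assumes w: "\<And>p. w p \<in> carrier G" and S: "finite S" "supp c \<subseteq> S"
  shows "Phi G w c = (\<Otimes>p\<in>S. w p [^] c p)"
  unfolding Phi_def
  by (rule finprod_mono_neutral_cong_left) (use w S in \<open>auto simp: supp_def\<close>)

lemma Phi_closed: "(\<And>p. w p \<in> carrier G) \<Longrightarrow> Phi G w c \<in> carrier G"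
  unfolding Phi_def by (intro finprod_closed) auto

lemma supp_add: "supp (\<lambda>p. c p + d p) \<subseteq> supp c \<union> supp d"
  by (auto simp: supp_def)

lemma Phi_add:
  assumes w: "\<And>p. w p \<in> carrier G" and f: "finite (supp c)" "finite (supp d)"
  shows "Phi G w (\<lambda>p. c p + d p) = Phi G w c \<otimes> Phi G w d"
proof -
  let ?S = "supp c \<union> supp d"
  have "Phi G w (\<lambda>p. c p + d p) = (\<Otimes>p\<in>?S. w p [^] (c p + d p))"
    by (rule Phi_superset) (use w f supp_add[of c d] in auto)
  also have "\<dots> = (\<Otimes>p\<in>?S. w p [^] c p \<otimes> w p [^] d p)"
    using w by (intro finprod_cong') (auto simp: int_pow_mult)
  also have "\<dots> = (\<Otimes>p\<in>?S. w p [^] c p) \<otimes> (\<Otimes>p\<in>?S. w p [^] d p)"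
    using w by (intro finprod_multf) auto
  also have "\<dots> = Phi G w c \<otimes> Phi G w d"
    using w f by (simp add: Phi_superset[symmetric])
  finally show ?thesis .
qed

lemma Phi_scale:
  assumes w: "\<And>p. w p \<in> carrier G" and f: "finite (supp c)"
  shows "Phi G w (\<lambda>p. n * c p) = Phi G w c [^] n"
proof -
  have "Phi G w (\<lambda>p. n * c p) = (\<Otimes>p\<in>supp c. w p [^] (n * c p))"
    by (rule Phi_superset) (use w f in \<open>auto simp: supp_def\<close>)
  also have "\<dots> = (\<Otimes>p\<in>supp c. (w p [^] c p) [^] n)"
    using w by (intro finprod_cong') (auto simp: int_pow_pow mult.commute Pi_iff)
  also have "\<dots> = Phi G w c [^] n"
    unfolding Phi_def using f
  proof (induction rule: finite_induct)
    case empty then show ?case by simp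
  next
    case (insert a A)
    then show ?case using w by (auto simp: finprod_insert int_pow_distrib)
  qed
  finally show ?thesis .
qed

lemma Phi_zero: "Phi G w (\<lambda>p. 0) = \<one>"
  by (simp add: Phi_def supp_def)

lemma Phi_delta:
  assumes w: "\<And>p. w p \<in> carrier G"
  shows "Phi G w (\<lambda>p. of_bool (p = t)) = w t"
proof -
  have "supp (\<lambda>p. of_bool (p = t) :: int) = {t}" by (auto simp: supp_def)
  moreover have "w t \<in> carrier G" using w by auto
  ultimately show ?thesis by (simp add: Phi_def)
qed

lemma Phi_sum:
  assumes w: "\<And>p. w p \<in> carrier G" and I: "finite I" and f: "\<And>i. i \<in> I \<Longrightarrow> finite (supp (f i))"
  shows "Phi G w (\<lambda>p. \<Sum>i\<in>I. f i p) = (\<Otimes>i\<in>I. Phi G w (f i))"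
  using I f
proof (induction rule: finite_induct)
  case empty then show ?case by (simp add: Phi_zero)
next
  case (insert a A)
  have fin: "finite (supp (\<lambda>p. \<Sum>i\<in>A. f i p))"
  proof (rule finite_subset)
    show "supp (\<lambda>p. \<Sum>i\<in>A. f i p) \<subseteq> (\<Union>i\<in>A. supp (f i))"
      by (auto simp: supp_def intro: ccontr dest: sum.neutral)
  qed (use insert in auto)
  have "Phi G w (\<lambda>p. \<Sum>i\<in>insert a A. f i p) = Phi G w (\<lambda>p. f a p + (\<Sum>i\<in>A. f i p))"
    using insert by simp
  also have "\<dots> = Phi G w (f a) \<otimes> Phi G w (\<lambda>p. \<Sum>i\<in>A. f i p)"
    by (rule Phi_add) (use w insert fin in auto)
  finally show ?case using insert w by (simp add: finprod_insert Phi_closed)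
qed

end

lemma (in group) cancel1 [simp]: "x \<in> carrier G \<Longrightarrow> y \<in> carrier G \<Longrightarrow> x \<otimes> (inv x \<otimes> y) = y"
  by (simp add: m_assoc[symmetric])
lemma (in group) cancel2 [simp]: "x \<in> carrier G \<Longrightarrow> y \<in> carrier G \<Longrightarrow> inv x \<otimes> (x \<otimes> y) = y"
  by (simp add: m_assoc[symmetric])

locale ext = E: group E + G: group G for E :: "('b, 'n) monoid_scheme" and G :: "('a, 'm) monoid_scheme" +
  fixes q :: "'b \<Rightarrow> 'a"
  assumes q_hom: "q \<in> hom E G" and q_onto: "q ` carrier E = carrier G"
    and K_fin: "finite (kernel E G q)"
    and K_comm: "comm_group (E\<lparr>carrier := kernel E G q\<rparr>)"
begin

abbreviation "K \<equiv> kernel E G q"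
abbreviation "C \<equiv> comm_subgroup E K"

lemmas gs = E.m_assoc E.inv_mult_group E.inv_inv E.r_inv E.l_inv E.r_one E.l_one E.m_closed E.inv_closed
  E.cancel1 E.cancel2

lemma ell_formula:
  assumes "a \<in> carrier E" "b \<in> carrier E" "u \<in> carrier E" "v \<in> carrier E"
  shows "grp_comm E (a \<otimes>\<^bsub>E\<^esub> u) (b \<otimes>\<^bsub>E\<^esub> v) \<otimes>\<^bsub>E\<^esub> inv\<^bsub>E\<^esub> (grp_comm E a b)
   = (a \<otimes>\<^bsub>E\<^esub> u \<otimes>\<^bsub>E\<^esub> inv\<^bsub>E\<^esub> a) \<otimes>\<^bsub>E\<^esub> ((a \<otimes>\<^bsub>E\<^esub> b) \<otimes>\<^bsub>E\<^esub> (v \<otimes>\<^bsub>E\<^esub> inv\<^bsub>E\<^esub> u) \<otimes>\<^bsub>E\<^esub> inv\<^bsub>E\<^esub> (a \<otimes>\<^bsub>E\<^esub> b))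
     \<otimes>\<^bsub>E\<^esub> ((a \<otimes>\<^bsub>E\<^esub> b \<otimes>\<^bsub>E\<^esub> inv\<^bsub>E\<^esub> a) \<otimes>\<^bsub>E\<^esub> inv\<^bsub>E\<^esub> v \<otimes>\<^bsub>E\<^esub> inv\<^bsub>E\<^esub> (a \<otimes>\<^bsub>E\<^esub> b \<otimes>\<^bsub>E\<^esub> inv\<^bsub>E\<^esub> a))"
  using assms by (simp add: grp_comm_def gs)

end

context ext begin

abbreviation "Kg \<equiv> E\<lparr>carrier := K\<rparr>"
abbreviation "Q \<equiv> Kg Mod C"
definition cls :: "'b \<Rightarrow> 'b set" where "cls k = C #>\<^bsub>Kg\<^esub> k"

lemma gh: "group_hom E G q" by (simp add: group_hom_def group_hom_axioms_def q_hom E.group_axioms G.group_axioms)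

lemma K_sub: "subgroup K E" using group_hom.subgroup_kernel[OF gh] .
lemma K_carr: "k \<in> K \<Longrightarrow> k \<in> carrier E" by (simp add: kernel_def)
lemma q_mult: "a \<in> carrier E \<Longrightarrow> b \<in> carrier E \<Longrightarrow> q (a \<otimes>\<^bsub>E\<^esub> b) = q a \<otimes>\<^bsub>G\<^esub> q b"
  using q_hom by (simp add: hom_mult)
lemma q_carr: "a \<in> carrier E \<Longrightarrow> q a \<in> carrier G"
  using q_hom by (simp add: hom_in_carrier)
lemma q_inv: "a \<in> carrier E \<Longrightarrow> q (inv\<^bsub>E\<^esub> a) = inv\<^bsub>G\<^esub> q a"
  using group_hom.hom_inv[OF gh] by simp
lemma q_one: "q \<one>\<^bsub>E\<^esub> = \<one>\<^bsub>G\<^esub>"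
  using group_hom.hom_one[OF gh] by simp
lemma inK: "k \<in> K \<longleftrightarrow> k \<in> carrier E \<and> q k = \<one>\<^bsub>G\<^esub>"
  by (simp add: kernel_def)

lemmas qs = q_mult q_carr q_inv q_one

lemma K_conj: "k \<in> K \<Longrightarrow> g \<in> carrier E \<Longrightarrow> g \<otimes>\<^bsub>E\<^esub> k \<otimes>\<^bsub>E\<^esub> inv\<^bsub>E\<^esub> g \<in> K"
  by (simp add: inK qs)

lemma K_mult: "a \<in> K \<Longrightarrow> b \<in> K \<Longrightarrow> a \<otimes>\<^bsub>E\<^esub> b \<in> K"
  by (simp add: inK qs)
lemma K_inv: "a \<in> K \<Longrightarrow> inv\<^bsub>E\<^esub> a \<in> K"
  by (simp add: inK qs)
lemma K_one: "\<one>\<^bsub>E\<^esub> \<in> K"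
  by (simp add: inK qs)

lemma K_commute: "a \<in> K \<Longrightarrow> b \<in> K \<Longrightarrow> a \<otimes>\<^bsub>E\<^esub> b = b \<otimes>\<^bsub>E\<^esub> a"
  using comm_monoid.m_comm[OF comm_group.axioms(1)[OF K_comm], of a b] by simp

lemma K_lcommute: "a \<in> K \<Longrightarrow> b \<in> K \<Longrightarrow> c \<in> K \<Longrightarrow> a \<otimes>\<^bsub>E\<^esub> (b \<otimes>\<^bsub>E\<^esub> c) = b \<otimes>\<^bsub>E\<^esub> (a \<otimes>\<^bsub>E\<^esub> c)"
  by (metis E.m_assoc K_carr K_commute)

definition "Cgen = {grp_comm E a b | a b. a \<in> K \<and> b \<in> carrier E}"

lemma C_def': "C = generate E Cgen" by (simp add: comm_subgroup_def Cgen_def)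

lemma grp_comm_K: "a \<in> K \<Longrightarrow> b \<in> carrier E \<Longrightarrow> grp_comm E a b \<in> K"
  by (simp add: grp_comm_def inK qs K_carr G.m_assoc)

lemma Cgen_K: "Cgen \<subseteq> K" using grp_comm_K by (auto simp: Cgen_def)

lemma C_sub: "subgroup C E"
  unfolding C_def' by (rule E.generate_is_subgroup) (use Cgen_K K_carr in auto)

lemma C_K: "C \<subseteq> K"
  unfolding C_def' by (rule E.generate_subgroup_incl[OF Cgen_K K_sub])

lemma comm_in_C: "a \<in> K \<Longrightarrow> b \<in> carrier E \<Longrightarrow> grp_comm E a b \<in> C"
  unfolding C_def' by (rule generate.incl) (auto simp: Cgen_def)

lemma conj_C: "k \<in> K \<Longrightarrow> g \<in> carrier E \<Longrightarrow> g \<otimes>\<^bsub>E\<^esub> k \<otimes>\<^bsub>E\<^esub> inv\<^bsub>E\<^esub> g \<otimes>\<^bsub>E\<^esub> inv\<^bsub>E\<^esub> k \<in> C"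
proof -
  assume k: "k \<in> K" and g: "g \<in> carrier E"
  have "inv\<^bsub>E\<^esub> (grp_comm E k g) \<in> C" using comm_in_C[OF k g] subgroup.m_inv_closed[OF C_sub] by blast
  also have "inv\<^bsub>E\<^esub> (grp_comm E k g) = g \<otimes>\<^bsub>E\<^esub> k \<otimes>\<^bsub>E\<^esub> inv\<^bsub>E\<^esub> g \<otimes>\<^bsub>E\<^esub> inv\<^bsub>E\<^esub> k"
    using k g K_carr by (simp add: grp_comm_def gs)
  finally show ?thesis .
qed

lemma Kg_comm: "comm_group Kg" using K_comm .
lemma Kg_group: "group Kg" using K_comm comm_group.axioms(2) by blast

lemma C_sub_Kg: "subgroup C Kg"
  using E.subgroup_incl[OF C_sub K_sub C_K] .

lemma C_normal_Kg: "C \<lhd> Kg"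
  using comm_group.normal_iff_subgroup[OF Kg_comm] C_sub_Kg by blast

lemma Q_comm: "comm_group Q"
  using comm_group.abelian_FactGroup[OF Kg_comm C_sub_Kg] .

lemma Q_group: "group Q" using Q_comm comm_group.axioms(2) by blast

lemma cls_hom: "cls \<in> hom Kg Q"
  using normal.r_coset_hom_Mod[OF C_normal_Kg] unfolding cls_def[abs_def] .

lemma cls_carr: "k \<in> K \<Longrightarrow> cls k \<in> carrier Q"
  using cls_hom by (auto simp: hom_def)

lemma cls_mult: "a \<in> K \<Longrightarrow> b \<in> K \<Longrightarrow> cls (a \<otimes>\<^bsub>E\<^esub> b) = cls a \<otimes>\<^bsub>Q\<^esub> cls b"
  using hom_mult[OF cls_hom, of a b] by simp

lemma Kg_inv: "a \<in> K \<Longrightarrow> inv\<^bsub>Kg\<^esub> a = inv\<^bsub>E\<^esub> a"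
  using E.m_inv_consistent[OF K_sub] by simp

lemma cls_inv: "a \<in> K \<Longrightarrow> cls (inv\<^bsub>E\<^esub> a) = inv\<^bsub>Q\<^esub> cls a"
  using group_hom.hom_inv[of Kg Q cls a] cls_hom Kg_group Q_group
  by (simp add: group_hom_def group_hom_axioms_def Kg_inv)

lemma cls_one: "cls \<one>\<^bsub>E\<^esub> = \<one>\<^bsub>Q\<^esub>"
  using group_hom.hom_one[of Kg Q cls] cls_hom Kg_group Q_group
  by (simp add: group_hom_def group_hom_axioms_def)

lemma cls_eq_one: "a \<in> K \<Longrightarrow> cls a = \<one>\<^bsub>Q\<^esub> \<longleftrightarrow> a \<in> C"
proof
  assume a: "a \<in> K" and "cls a = \<one>\<^bsub>Q\<^esub>"
  then have "C #>\<^bsub>Kg\<^esub> a = C" by (simp add: cls_def)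
  moreover have "a \<in> C #>\<^bsub>Kg\<^esub> a"
    using group.rcos_self[OF Kg_group, of a C] a C_sub_Kg by simp
  ultimately show "a \<in> C" by simp
next
  assume a: "a \<in> K" and "a \<in> C"
  then show "cls a = \<one>\<^bsub>Q\<^esub>"
    using subgroup.rcos_const[OF C_sub_Kg Kg_group] by (simp add: cls_def)
qed

lemma cls_eqI: "a \<in> K \<Longrightarrow> b \<in> K \<Longrightarrow> a \<otimes>\<^bsub>E\<^esub> inv\<^bsub>E\<^esub> b \<in> C \<Longrightarrow> cls a = cls b"
proof -
  assume a: "a \<in> K" and b: "b \<in> K" and ab: "a \<otimes>\<^bsub>E\<^esub> inv\<^bsub>E\<^esub> b \<in> C"
  have "cls (a \<otimes>\<^bsub>E\<^esub> inv\<^bsub>E\<^esub> b) = \<one>\<^bsub>Q\<^esub>" using ab a b K_mult K_inv cls_eq_one by blast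
  then have "cls a \<otimes>\<^bsub>Q\<^esub> inv\<^bsub>Q\<^esub> cls b = \<one>\<^bsub>Q\<^esub>" using a b K_inv by (simp add: cls_mult cls_inv)
  then have "cls a = \<one>\<^bsub>Q\<^esub> \<otimes>\<^bsub>Q\<^esub> cls b"
    using group.inv_solve_right'[OF Q_group monoid.one_closed[OF group.is_monoid[OF Q_group]] cls_carr[OF a] cls_carr[OF b]] by blast
  also have "\<dots> = cls b" by (rule monoid.l_one[OF group.is_monoid[OF Q_group] cls_carr[OF b]])
  finally show ?thesis .
qed

lemma cls_conj: "k \<in> K \<Longrightarrow> g \<in> carrier E \<Longrightarrow> cls (g \<otimes>\<^bsub>E\<^esub> k \<otimes>\<^bsub>E\<^esub> inv\<^bsub>E\<^esub> g) = cls k"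
  by (rule cls_eqI) (auto intro: K_conj conj_C)

end

lemma (in group) surf_rel_closed:
  "(\<And>i. i < n \<Longrightarrow> f i \<in> carrier G \<and> g i \<in> carrier G) \<Longrightarrow> surf_rel G f g n \<in> carrier G"
  by (induction n) (auto simp: grp_comm_def)

lemma (in group) grp_comm_closed: "a \<in> carrier G \<Longrightarrow> b \<in> carrier G \<Longrightarrow> grp_comm G a b \<in> carrier G"
  by (simp add: grp_comm_def)

lemma surf_rel_cong:
  "(\<And>i. i < n \<Longrightarrow> f i = f' i \<and> g i = g' i) \<Longrightarrow> surf_rel G f g n = surf_rel G f' g' n"
  by (induction n) auto

context ext begin

lemma q_grp_comm: "a \<in> carrier E \<Longrightarrow> b \<in> carrier E \<Longrightarrow> q (grp_comm E a b) = grp_comm G (q a) (q b)"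
  by (simp add: grp_comm_def qs)

lemma q_surf_rel:
  "(\<And>i. i < n \<Longrightarrow> f i \<in> carrier E \<and> g i \<in> carrier E) \<Longrightarrow>
    q (surf_rel E f g n) = surf_rel G (\<lambda>i. q (f i)) (\<lambda>i. q (g i)) n"
proof (induction n)
  case 0 then show ?case by (simp add: qs)
next
  case (Suc n)
  then show ?case
    by (simp add: q_mult E.surf_rel_closed E.grp_comm_closed q_grp_comm)
qed

definition sec :: "'a \<Rightarrow> 'b" where "sec a = inv_into (carrier E) q a"
lemma sec_carr: "a \<in> carrier G \<Longrightarrow> sec a \<in> carrier E"
  unfolding sec_def using q_onto by (metis inv_into_into)
lemma q_sec: "a \<in> carrier G \<Longrightarrow> q (sec a) = a"
  unfolding sec_def using q_onto by (metis f_inv_into_f)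

lemma mm_generic:
  assumes c: "R \<in> carrier E" "a \<in> carrier E" "b \<in> carrier E" "u \<in> carrier E" "v \<in> carrier E"
  shows "R \<otimes>\<^bsub>E\<^esub> (grp_comm E (a \<otimes>\<^bsub>E\<^esub> u) (b \<otimes>\<^bsub>E\<^esub> v) \<otimes>\<^bsub>E\<^esub> inv\<^bsub>E\<^esub> (grp_comm E a b)) \<otimes>\<^bsub>E\<^esub> inv\<^bsub>E\<^esub> R = 
   (R \<otimes>\<^bsub>E\<^esub> a) \<otimes>\<^bsub>E\<^esub> u \<otimes>\<^bsub>E\<^esub> inv\<^bsub>E\<^esub> (R \<otimes>\<^bsub>E\<^esub> a) \<otimes>\<^bsub>E\<^esub> ((R \<otimes>\<^bsub>E\<^esub> a \<otimes>\<^bsub>E\<^esub> b) \<otimes>\<^bsub>E\<^esub> v \<otimes>\<^bsub>E\<^esub> inv\<^bsub>E\<^esub> (R \<otimes>\<^bsub>E\<^esub> a \<otimes>\<^bsub>E\<^esub> b))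
   \<otimes>\<^bsub>E\<^esub> inv\<^bsub>E\<^esub> ((R \<otimes>\<^bsub>E\<^esub> a \<otimes>\<^bsub>E\<^esub> b) \<otimes>\<^bsub>E\<^esub> u \<otimes>\<^bsub>E\<^esub> inv\<^bsub>E\<^esub> (R \<otimes>\<^bsub>E\<^esub> a \<otimes>\<^bsub>E\<^esub> b))
   \<otimes>\<^bsub>E\<^esub> inv\<^bsub>E\<^esub> ((R \<otimes>\<^bsub>E\<^esub> a \<otimes>\<^bsub>E\<^esub> b \<otimes>\<^bsub>E\<^esub> inv\<^bsub>E\<^esub> a) \<otimes>\<^bsub>E\<^esub> v \<otimes>\<^bsub>E\<^esub> inv\<^bsub>E\<^esub> (R \<otimes>\<^bsub>E\<^esub> a \<otimes>\<^bsub>E\<^esub> b \<otimes>\<^bsub>E\<^esub> inv\<^bsub>E\<^esub> a))"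
  using c by (simp add: grp_comm_def gs)

definition cj :: "'b \<Rightarrow> 'b \<Rightarrow> 'b" where "cj g k = g \<otimes>\<^bsub>E\<^esub> k \<otimes>\<^bsub>E\<^esub> inv\<^bsub>E\<^esub> g"

lemma cj_K: "g \<in> carrier E \<Longrightarrow> k \<in> K \<Longrightarrow> cj g k \<in> K"
  by (simp add: cj_def K_conj)
lemma cj_mult: "g \<in> carrier E \<Longrightarrow> u \<in> carrier E \<Longrightarrow> v \<in> carrier E \<Longrightarrow>
   cj g (u \<otimes>\<^bsub>E\<^esub> v) = cj g u \<otimes>\<^bsub>E\<^esub> cj g v"
  by (simp add: cj_def gs)
lemma cj_inv: "g \<in> carrier E \<Longrightarrow> u \<in> carrier E \<Longrightarrow> cj g (inv\<^bsub>E\<^esub> u) = inv\<^bsub>E\<^esub> (cj g u)"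
  by (simp add: cj_def gs)
lemma cls_conj': "g \<in> carrier E \<Longrightarrow> k \<in> K \<Longrightarrow> cls (cj g k) = cls k"
  by (simp add: cj_def cls_conj)

end

locale ext2 = ext E G q for E :: "('b, 'n) monoid_scheme" and G :: "('a, 'm) monoid_scheme" and q +
  fixes h :: nat and x y :: "nat \<Rightarrow> 'a"
  assumes epi: "surf_epi G h x y"
begin

lemma x_carr: "i < h \<Longrightarrow> x i \<in> carrier G" and y_carr: "i < h \<Longrightarrow> y i \<in> carrier G"
  using epi by (auto simp: surf_epi_def surf_hom_def)
lemma rel: "surf_rel G x y h = \<one>\<^bsub>G\<^esub>"
  using epi by (auto simp: surf_epi_def surf_hom_def)
lemma gen: "generate G (x ` {..<h} \<union> y ` {..<h}) = carrier G"
  using epi by (auto simp: surf_epi_def)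

definition "x0 i = sec (x i)"
definition "y0 i = sec (y i)"
lemma x0_carr: "i < h \<Longrightarrow> x0 i \<in> carrier E" and y0_carr: "i < h \<Longrightarrow> y0 i \<in> carrier E"
  by (simp_all add: x0_def y0_def sec_carr x_carr y_carr)
lemma q_x0: "i < h \<Longrightarrow> q (x0 i) = x i" and q_y0: "i < h \<Longrightarrow> q (y0 i) = y i"
  by (simp_all add: x0_def y0_def q_sec x_carr y_carr)

abbreviation "HH \<equiv> product_group {..<2*h} (\<lambda>_. Kg)"

lemma HH_group: "group HH" using Kg_group by simp

definition "Xg \<gamma> i = x0 i \<otimes>\<^bsub>E\<^esub> \<gamma> i"
definition "Yg \<gamma> i = y0 i \<otimes>\<^bsub>E\<^esub> \<gamma> (h + i)"
definition "Rn n = surf_rel E x0 y0 n"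
definition "Ln n \<gamma> = surf_rel E (Xg \<gamma>) (Yg \<gamma>) n \<otimes>\<^bsub>E\<^esub> inv\<^bsub>E\<^esub> Rn n"
definition "mm n \<gamma> = Rn n \<otimes>\<^bsub>E\<^esub> (grp_comm E (Xg \<gamma> n) (Yg \<gamma> n) \<otimes>\<^bsub>E\<^esub> inv\<^bsub>E\<^esub> (grp_comm E (x0 n) (y0 n))) \<otimes>\<^bsub>E\<^esub> inv\<^bsub>E\<^esub> Rn n"

lemma gam_K: "\<gamma> \<in> carrier HH \<Longrightarrow> i < 2*h \<Longrightarrow> \<gamma> i \<in> K"
  by (auto simp: PiE_iff)

lemma gam_K1: assumes g: "\<gamma> \<in> carrier HH" and i: "i < h" shows "\<gamma> i \<in> K"
proof -
  have "i < 2*h" using i by simp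
  then show ?thesis using gam_K[OF g] by blast
qed
lemma gam_K2: assumes g: "\<gamma> \<in> carrier HH" and i: "i < h" shows "\<gamma> (h+i) \<in> K"
proof -
  have "h+i < 2*h" using i by simp
  then show ?thesis using gam_K[OF g] by blast
qed

lemma X_carr: "\<gamma> \<in> carrier HH \<Longrightarrow> i < h \<Longrightarrow> Xg \<gamma> i \<in> carrier E"
  using gam_K1[of \<gamma> i] K_carr by (simp add: Xg_def x0_carr)
lemma Y_carr: "\<gamma> \<in> carrier HH \<Longrightarrow> i < h \<Longrightarrow> Yg \<gamma> i \<in> carrier E"
  using gam_K2[of \<gamma> i] K_carr by (simp add: Yg_def y0_carr)
lemma q_X: "\<gamma> \<in> carrier HH \<Longrightarrow> i < h \<Longrightarrow> q (Xg \<gamma> i) = x i"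
  using gam_K1[of \<gamma> i] K_carr x0_carr by (simp add: Xg_def q_mult q_x0 inK x_carr)
lemma q_Y: "\<gamma> \<in> carrier HH \<Longrightarrow> i < h \<Longrightarrow> q (Yg \<gamma> i) = y i"
  using gam_K2[of \<gamma> i] K_carr y0_carr by (simp add: Yg_def q_mult q_y0 inK y_carr)

lemma Rn_carr: "n \<le> h \<Longrightarrow> Rn n \<in> carrier E"
  unfolding Rn_def by (rule E.surf_rel_closed) (auto simp: x0_carr y0_carr)
lemma SX_carr: assumes g: "\<gamma> \<in> carrier HH" and n: "n \<le> h"
  shows "surf_rel E (Xg \<gamma>) (Yg \<gamma>) n \<in> carrier E"
proof (rule E.surf_rel_closed)
  fix i assume "i < n" then have "i < h" using n by linarith
  then show "Xg \<gamma> i \<in> carrier E \<and> Yg \<gamma> i \<in> carrier E" using X_carr Y_carr g by blast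
qed

lemma Ln_K: "\<gamma> \<in> carrier HH \<Longrightarrow> n \<le> h \<Longrightarrow> Ln n \<gamma> \<in> K"
proof -
  assume g: "\<gamma> \<in> carrier HH" and n: "n \<le> h"
  have lt: "\<And>i. i < n \<Longrightarrow> i < h" using n by linarith
  have "q (surf_rel E (Xg \<gamma>) (Yg \<gamma>) n) = surf_rel G (\<lambda>i. q (Xg \<gamma> i)) (\<lambda>i. q (Yg \<gamma> i)) n"
    using g lt X_carr Y_carr by (intro q_surf_rel) blast
  also have "\<dots> = surf_rel G x y n"
    using g lt q_X q_Y by (intro surf_rel_cong) blast
  finally have 1: "q (surf_rel E (Xg \<gamma>) (Yg \<gamma>) n) = surf_rel G x y n" .
  have "q (Rn n) = surf_rel G (\<lambda>i. q (x0 i)) (\<lambda>i. q (y0 i)) n"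
    unfolding Rn_def using lt x0_carr y0_carr by (intro q_surf_rel) blast
  also have "\<dots> = surf_rel G x y n"
    using lt q_x0 q_y0 by (intro surf_rel_cong) blast
  finally have 2: "q (Rn n) = surf_rel G x y n" .
  show ?thesis using 1 2 g n SX_carr Rn_carr
    by (simp add: Ln_def inK qs G.surf_rel_closed x_carr y_carr)
qed

lemma Ln_Suc: assumes g: "\<gamma> \<in> carrier HH" and n: "n < h"
  shows "Ln (Suc n) \<gamma> = Ln n \<gamma> \<otimes>\<^bsub>E\<^esub> mm n \<gamma>"
proof -
  have c: "surf_rel E (Xg \<gamma>) (Yg \<gamma>) n \<in> carrier E" "Rn n \<in> carrier E" "Xg \<gamma> n \<in> carrier E"
    "Yg \<gamma> n \<in> carrier E" "x0 n \<in> carrier E" "y0 n \<in> carrier E"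
    using g n SX_carr Rn_carr X_carr Y_carr x0_carr y0_carr by auto
  have r: "Rn (Suc n) = Rn n \<otimes>\<^bsub>E\<^esub> grp_comm E (x0 n) (y0 n)" by (simp add: Rn_def)
  show ?thesis unfolding Ln_def mm_def r surf_rel.simps(2)
    using c by (simp add: grp_comm_def gs)
qed

lemma mm_formula: assumes g: "\<gamma> \<in> carrier HH" and n: "n < h"
  shows "mm n \<gamma> =
   cj (Rn n \<otimes>\<^bsub>E\<^esub> x0 n) (\<gamma> n) \<otimes>\<^bsub>E\<^esub> cj (Rn n \<otimes>\<^bsub>E\<^esub> x0 n \<otimes>\<^bsub>E\<^esub> y0 n) (\<gamma> (h+n))
   \<otimes>\<^bsub>E\<^esub> inv\<^bsub>E\<^esub> (cj (Rn n \<otimes>\<^bsub>E\<^esub> x0 n \<otimes>\<^bsub>E\<^esub> y0 n) (\<gamma> n))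
   \<otimes>\<^bsub>E\<^esub> inv\<^bsub>E\<^esub> (cj (Rn n \<otimes>\<^bsub>E\<^esub> x0 n \<otimes>\<^bsub>E\<^esub> y0 n \<otimes>\<^bsub>E\<^esub> inv\<^bsub>E\<^esub> (x0 n)) (\<gamma> (h+n)))"
proof -
  have c: "\<gamma> n \<in> carrier E" "\<gamma> (h+n) \<in> carrier E" "Rn n \<in> carrier E"
     "x0 n \<in> carrier E" "y0 n \<in> carrier E"
    using gam_K1[OF g n] gam_K2[OF g n] K_carr Rn_carr[of n] x0_carr[OF n] y0_carr[OF n] n by auto
  have "mm n \<gamma> = Rn n \<otimes>\<^bsub>E\<^esub> (grp_comm E (x0 n \<otimes>\<^bsub>E\<^esub> \<gamma> n) (y0 n \<otimes>\<^bsub>E\<^esub> \<gamma> (h+n)) \<otimes>\<^bsub>E\<^esub> inv\<^bsub>E\<^esub> (grp_comm E (x0 n) (y0 n))) \<otimes>\<^bsub>E\<^esub> inv\<^bsub>E\<^esub> Rn n"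
    by (simp only: mm_def Xg_def Yg_def)
  also note mm_generic[OF c(3,4,5,1,2)]
  finally show ?thesis by (simp only: cj_def)
qed

end

lemma (in comm_group) eight:
  assumes "a \<in> carrier G" "a' \<in> carrier G" "b \<in> carrier G" "b' \<in> carrier G"
    "c \<in> carrier G" "c' \<in> carrier G" "d \<in> carrier G" "d' \<in> carrier G"
  shows "(a \<otimes> a') \<otimes> (b \<otimes> b') \<otimes> inv (c \<otimes> c') \<otimes> inv (d \<otimes> d')
       = (a \<otimes> b \<otimes> inv c \<otimes> inv d) \<otimes> (a' \<otimes> b' \<otimes> inv c' \<otimes> inv d')"
  using assms by (simp add: m_ac inv_mult)

lemma (in comm_group) abab: "a \<in> carrier G \<Longrightarrow> b \<in> carrier G \<Longrightarrow> a \<otimes> b \<otimes> inv a \<otimes> inv b = \<one>"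
proof -
  assume a: "a \<in> carrier G" and b: "b \<in> carrier G"
  show ?thesis using a b by (simp add: m_assoc m_lcomm[of b "inv a"])
qed

context ext2 begin

lemma K_eight:
  assumes "a \<in> K" "a' \<in> K" "b \<in> K" "b' \<in> K" "c \<in> K" "c' \<in> K" "d \<in> K" "d' \<in> K"
  shows "(a \<otimes>\<^bsub>E\<^esub> a') \<otimes>\<^bsub>E\<^esub> (b \<otimes>\<^bsub>E\<^esub> b') \<otimes>\<^bsub>E\<^esub> inv\<^bsub>E\<^esub> (c \<otimes>\<^bsub>E\<^esub> c') \<otimes>\<^bsub>E\<^esub> inv\<^bsub>E\<^esub> (d \<otimes>\<^bsub>E\<^esub> d')
       = (a \<otimes>\<^bsub>E\<^esub> b \<otimes>\<^bsub>E\<^esub> inv\<^bsub>E\<^esub> c \<otimes>\<^bsub>E\<^esub> inv\<^bsub>E\<^esub> d) \<otimes>\<^bsub>E\<^esub> (a' \<otimes>\<^bsub>E\<^esub> b' \<otimes>\<^bsub>E\<^esub> inv\<^bsub>E\<^esub> c' \<otimes>\<^bsub>E\<^esub> inv\<^bsub>E\<^esub> d')"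
  using comm_group.eight[OF K_comm, of a a' b b' c c' d d'] assms
  by (simp add: Kg_inv K_mult)

lemma cj_closed: "g \<in> carrier E \<Longrightarrow> k \<in> carrier E \<Longrightarrow> cj g k \<in> carrier E"
  by (simp add: cj_def)

lemma gH: "\<gamma> \<in> carrier HH \<Longrightarrow> \<delta> \<in> carrier HH \<Longrightarrow> i < 2*h \<Longrightarrow> (\<gamma> \<otimes>\<^bsub>HH\<^esub> \<delta>) i = \<gamma> i \<otimes>\<^bsub>E\<^esub> \<delta> i"
  by simp

lemma gH1: assumes "\<gamma> \<in> carrier HH" "\<delta> \<in> carrier HH" and i: "i < h"
  shows "(\<gamma> \<otimes>\<^bsub>HH\<^esub> \<delta>) i = \<gamma> i \<otimes>\<^bsub>E\<^esub> \<delta> i"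
proof -
  have l: "i < 2*h" using i by simp
  show ?thesis by (rule gH[OF assms(1,2) l])
qed

lemma gH2: assumes "\<gamma> \<in> carrier HH" "\<delta> \<in> carrier HH" and i: "i < h"
  shows "(\<gamma> \<otimes>\<^bsub>HH\<^esub> \<delta>) (h+i) = \<gamma> (h+i) \<otimes>\<^bsub>E\<^esub> \<delta> (h+i)"
proof -
  have l: "h+i < 2*h" using i by simp
  show ?thesis by (rule gH[OF assms(1,2) l])
qed

lemma HH_mult_closed: "\<gamma> \<in> carrier HH \<Longrightarrow> \<delta> \<in> carrier HH \<Longrightarrow> \<gamma> \<otimes>\<^bsub>HH\<^esub> \<delta> \<in> carrier HH"
  by (rule monoid.m_closed[OF group.is_monoid[OF HH_group]])

definition "AA n = Rn n \<otimes>\<^bsub>E\<^esub> x0 n"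
definition "BB n = Rn n \<otimes>\<^bsub>E\<^esub> x0 n \<otimes>\<^bsub>E\<^esub> y0 n"
definition "CC n = Rn n \<otimes>\<^bsub>E\<^esub> x0 n \<otimes>\<^bsub>E\<^esub> y0 n \<otimes>\<^bsub>E\<^esub> inv\<^bsub>E\<^esub> (x0 n)"

lemma ABC_carr: "n < h \<Longrightarrow> AA n \<in> carrier E \<and> BB n \<in> carrier E \<and> CC n \<in> carrier E"
  using Rn_carr[of n] x0_carr[of n] y0_carr[of n] by (simp add: AA_def BB_def CC_def)

lemma mm_formula': "\<gamma> \<in> carrier HH \<Longrightarrow> n < h \<Longrightarrow> mm n \<gamma> =
   cj (AA n) (\<gamma> n) \<otimes>\<^bsub>E\<^esub> cj (BB n) (\<gamma> (h+n)) \<otimes>\<^bsub>E\<^esub> inv\<^bsub>E\<^esub> (cj (BB n) (\<gamma> n))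
   \<otimes>\<^bsub>E\<^esub> inv\<^bsub>E\<^esub> (cj (CC n) (\<gamma> (h+n)))"
  unfolding AA_def BB_def CC_def by (rule mm_formula)

lemma mm_K: assumes g: "\<gamma> \<in> carrier HH" and n: "n < h" shows "mm n \<gamma> \<in> K"
  using ABC_carr[OF n] gam_K1[OF g n] gam_K2[OF g n]
  by (simp add: mm_formula'[OF g n] cj_K K_mult K_inv)

lemma mm_mult: assumes g: "\<gamma> \<in> carrier HH" and d: "\<delta> \<in> carrier HH" and n: "n < h"
  shows "mm n (\<gamma> \<otimes>\<^bsub>HH\<^esub> \<delta>) = mm n \<gamma> \<otimes>\<^bsub>E\<^esub> mm n \<delta>"
proof -
  have abc: "AA n \<in> carrier E" "BB n \<in> carrier E" "CC n \<in> carrier E" using ABC_carr[OF n] by auto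
  have k: "\<gamma> n \<in> K" "\<gamma> (h+n) \<in> K" "\<delta> n \<in> K" "\<delta> (h+n) \<in> K"
    using gam_K1[OF g n] gam_K2[OF g n] gam_K1[OF d n] gam_K2[OF d n] by auto
  have kc: "\<gamma> n \<in> carrier E" "\<gamma> (h+n) \<in> carrier E" "\<delta> n \<in> carrier E" "\<delta> (h+n) \<in> carrier E"
    using k K_carr by auto
  show ?thesis
    unfolding mm_formula'[OF HH_mult_closed[OF g d] n] mm_formula'[OF g n] mm_formula'[OF d n]
      gH1[OF g d n] gH2[OF g d n]
    using abc kc by (simp only: cj_mult) (rule K_eight; use abc k cj_K in blast)
qed

lemma Ln_0: "Ln 0 \<gamma> = \<one>\<^bsub>E\<^esub>"
  by (simp add: Ln_def Rn_def)

lemma Ln_mult: assumes g: "\<gamma> \<in> carrier HH" and d: "\<delta> \<in> carrier HH"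
  shows "n \<le> h \<Longrightarrow> Ln n (\<gamma> \<otimes>\<^bsub>HH\<^esub> \<delta>) = Ln n \<gamma> \<otimes>\<^bsub>E\<^esub> Ln n \<delta>"
proof (induction n)
  case 0 then show ?case by (simp add: Ln_0)
next
  case (Suc n)
  then have n: "n < h" by simp
  have gd: "\<gamma> \<otimes>\<^bsub>HH\<^esub> \<delta> \<in> carrier HH" by (rule HH_mult_closed[OF g d])
  have k: "Ln n \<gamma> \<in> K" "Ln n \<delta> \<in> K" "mm n \<gamma> \<in> K" "mm n \<delta> \<in> K"
    using Ln_K[OF g] Ln_K[OF d] mm_K[OF g n] mm_K[OF d n] n by auto
  have ih: "Ln n (\<gamma> \<otimes>\<^bsub>HH\<^esub> \<delta>) = Ln n \<gamma> \<otimes>\<^bsub>E\<^esub> Ln n \<delta>"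
    using n by (intro Suc.IH) simp
  have "Ln (Suc n) (\<gamma> \<otimes>\<^bsub>HH\<^esub> \<delta>) = (Ln n \<gamma> \<otimes>\<^bsub>E\<^esub> Ln n \<delta>) \<otimes>\<^bsub>E\<^esub> (mm n \<gamma> \<otimes>\<^bsub>E\<^esub> mm n \<delta>)"
    by (simp only: Ln_Suc[OF gd n] ih mm_mult[OF g d n])
  also have "\<dots> = (Ln n \<gamma> \<otimes>\<^bsub>E\<^esub> mm n \<gamma>) \<otimes>\<^bsub>E\<^esub> (Ln n \<delta> \<otimes>\<^bsub>E\<^esub> mm n \<delta>)"
    using k K_carr by (simp add: E.m_assoc K_lcommute[of "Ln n \<delta>" "mm n \<gamma>"])
  also have "\<dots> = Ln (Suc n) \<gamma> \<otimes>\<^bsub>E\<^esub> Ln (Suc n) \<delta>"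
    using Ln_Suc[OF g n] Ln_Suc[OF d n] by simp
  finally show ?case .
qed

definition "L = Ln h"

lemma L_hom: "L \<in> hom HH Kg"
  unfolding hom_def L_def using Ln_K Ln_mult by auto

lemma L_group_hom: "group_hom HH Kg L"
  using L_hom HH_group Kg_group by (simp add: group_hom_def group_hom_axioms_def)

lemma cls_cj: "g \<in> carrier E \<Longrightarrow> k \<in> K \<Longrightarrow> cls (cj g k) = cls k"
  by (rule cls_conj')

lemma mm_C: assumes g: "\<gamma> \<in> carrier HH" and n: "n < h" shows "mm n \<gamma> \<in> C"
proof -
  have abc: "AA n \<in> carrier E" "BB n \<in> carrier E" "CC n \<in> carrier E" using ABC_carr[OF n] by auto
  have k: "\<gamma> n \<in> K" "\<gamma> (h+n) \<in> K" using gam_K1[OF g n] gam_K2[OF g n] by auto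
  interpret Qc: comm_group Q by (rule Q_comm)
  have "cls (mm n \<gamma>) = cls (\<gamma> n) \<otimes>\<^bsub>Q\<^esub> cls (\<gamma> (h+n)) \<otimes>\<^bsub>Q\<^esub> inv\<^bsub>Q\<^esub> (cls (\<gamma> n)) \<otimes>\<^bsub>Q\<^esub> inv\<^bsub>Q\<^esub> (cls (\<gamma> (h+n)))"
    unfolding mm_formula'[OF g n] using abc k
    by (simp add: cj_K K_mult K_inv cls_mult cls_inv cls_cj)
  also have "\<dots> = \<one>\<^bsub>Q\<^esub>"
    by (rule Qc.abab[OF cls_carr[OF k(1)] cls_carr[OF k(2)]])
  finally show ?thesis using cls_eq_one mm_K[OF g n] by blast
qed

lemma Ln_C: assumes g: "\<gamma> \<in> carrier HH" shows "n \<le> h \<Longrightarrow> Ln n \<gamma> \<in> C"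
proof (induction n)
  case 0 then show ?case using subgroup.one_closed[OF C_sub] by (simp add: Ln_0)
next
  case (Suc n)
  then have n: "n < h" by simp
  show ?case using Ln_Suc[OF g n] Suc mm_C[OF g n] subgroup.m_closed[OF C_sub] by simp
qed

end


lemma (in group) grp_comm_sub: "subgroup H G \<Longrightarrow> a \<in> H \<Longrightarrow> b \<in> H \<Longrightarrow> grp_comm G a b \<in> H"
  by (simp add: grp_comm_def subgroup.m_closed subgroup.m_inv_closed)

lemma (in group) surf_rel_sub: "subgroup H G \<Longrightarrow> (\<And>i. i < n \<Longrightarrow> f i \<in> H \<and> g i \<in> H) \<Longrightarrow> surf_rel G f g n \<in> H"
  by (induction n) (auto simp: subgroup.one_closed subgroup.m_closed grp_comm_sub)

context ext2 begin

lemmas Gs = G.m_assoc G.inv_mult_group G.inv_inv G.r_inv G.l_inv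
  G.cancel1 G.cancel2 G.inv_closed G.m_closed G.r_one G.l_one


definition "sp i u v = (\<lambda>j\<in>{..<2*h}. if j = i then u else if j = h + i then v else \<one>\<^bsub>E\<^esub>)"

lemma sp_carr: "i < h \<Longrightarrow> u \<in> K \<Longrightarrow> v \<in> K \<Longrightarrow> sp i u v \<in> carrier HH"
  by (auto simp: sp_def K_one)

lemma cj_one: "g \<in> carrier E \<Longrightarrow> cj g \<one>\<^bsub>E\<^esub> = \<one>\<^bsub>E\<^esub>"
  by (simp add: cj_def)

lemma mm_sp_other: assumes i: "i < h" "j < h" "j \<noteq> i" and uv: "u \<in> K" "v \<in> K"
  shows "mm j (sp i u v) = \<one>\<^bsub>E\<^esub>"
proof -
  have j1: "j < 2*h" using i by simp
  have j2: "h + j < 2*h" using i by simp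
  have "sp i u v j = \<one>\<^bsub>E\<^esub>" "sp i u v (h+j) = \<one>\<^bsub>E\<^esub>"
    using i j1 j2 by (auto simp: sp_def)
  then show ?thesis
    using ABC_carr[OF i(2)] by (simp add: mm_formula'[OF sp_carr[OF i(1) uv] i(2)] cj_one)
qed

lemma sp_i: "i < h \<Longrightarrow> sp i u v i = u" by (simp add: sp_def)
lemma sp_hi: "i < h \<Longrightarrow> sp i u v (h+i) = v" by (simp add: sp_def)

lemma Ln_sp: assumes i: "i < h" and uv: "u \<in> K" "v \<in> K"
  shows "n \<le> h \<Longrightarrow> Ln n (sp i u v) = (if n \<le> i then \<one>\<^bsub>E\<^esub> else mm i (sp i u v))"
proof (induction n)
  case 0 then show ?case by (simp add: Ln_0)
next
  case (Suc n)
  then have n: "n < h" by simp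
  have ih: "Ln n (sp i u v) = (if n \<le> i then \<one>\<^bsub>E\<^esub> else mm i (sp i u v))"
    using n by (intro Suc.IH) simp
  have mk: "mm i (sp i u v) \<in> K" by (rule mm_K[OF sp_carr[OF i uv] i])
  have st: "Ln (Suc n) (sp i u v) = Ln n (sp i u v) \<otimes>\<^bsub>E\<^esub> mm n (sp i u v)"
    by (rule Ln_Suc[OF sp_carr[OF i uv] n])
  show ?case
  proof (cases "n = i")
    case True
    then show ?thesis using ih mk K_carr st by simp
  next
    case False
    then have "mm n (sp i u v) = \<one>\<^bsub>E\<^esub>" using mm_sp_other[OF i n _ uv] by blast
    then show ?thesis using ih mk K_carr False st by simp
  qed
qed

lemma L_sp: assumes i: "i < h" and uv: "u \<in> K" "v \<in> K"
  shows "L (sp i u v) = cj (AA i) u \<otimes>\<^bsub>E\<^esub> cj (BB i) v \<otimes>\<^bsub>E\<^esub> inv\<^bsub>E\<^esub> (cj (BB i) u) \<otimes>\<^bsub>E\<^esub> inv\<^bsub>E\<^esub> (cj (CC i) v)"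
  using Ln_sp[OF i uv, of h] i
  by (simp add: L_def mm_formula'[OF sp_carr[OF i uv] i] sp_i sp_hi)

abbreviation "II \<equiv> L ` carrier HH"

lemma II_sub_Kg: "subgroup II Kg"
  using group_hom.img_is_subgroup[OF L_group_hom] .

lemma II_K: "II \<subseteq> K" using subgroup.subset[OF II_sub_Kg] by simp

lemma II_mult: "a \<in> II \<Longrightarrow> b \<in> II \<Longrightarrow> a \<otimes>\<^bsub>E\<^esub> b \<in> II"
  using subgroup.m_closed[OF II_sub_Kg, of a b] by simp

lemma II_inv: "a \<in> II \<Longrightarrow> inv\<^bsub>E\<^esub> a \<in> II"
  using subgroup.m_inv_closed[OF II_sub_Kg, of a] II_K Kg_inv by auto

lemma II_one: "\<one>\<^bsub>E\<^esub> \<in> II"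
  using subgroup.one_closed[OF II_sub_Kg] by simp

lemma II_sub: "subgroup II E"
  by (rule E.subgroupI) (use II_K K_carr II_one II_mult II_inv in auto)

lemma II_C: "II \<subseteq> C"
  unfolding L_def using Ln_C by auto

lemma comm_c: assumes i: "i < h" and k: "k \<in> K"
  shows "grp_comm E k (BB i \<otimes>\<^bsub>E\<^esub> inv\<^bsub>E\<^esub> (AA i)) \<in> II"
proof -
  have abc: "AA i \<in> carrier E" "BB i \<in> carrier E" "CC i \<in> carrier E" using ABC_carr[OF i] by auto
  define u where "u = cj (inv\<^bsub>E\<^esub> (AA i)) k"
  have u: "u \<in> K" unfolding u_def using abc k by (simp add: cj_K)
  have "L (sp i u \<one>\<^bsub>E\<^esub>) = grp_comm E k (BB i \<otimes>\<^bsub>E\<^esub> inv\<^bsub>E\<^esub> (AA i))"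
    unfolding L_sp[OF i u K_one] using abc k K_carr
    by (simp add: u_def cj_def grp_comm_def gs)
  then show ?thesis using sp_carr[OF i u K_one] by (metis image_eqI)
qed

lemma comm_d: assumes i: "i < h" and k: "k \<in> K"
  shows "grp_comm E k (CC i \<otimes>\<^bsub>E\<^esub> inv\<^bsub>E\<^esub> (BB i)) \<in> II"
proof -
  have abc: "AA i \<in> carrier E" "BB i \<in> carrier E" "CC i \<in> carrier E" using ABC_carr[OF i] by auto
  define v where "v = cj (inv\<^bsub>E\<^esub> (BB i)) k"
  have v: "v \<in> K" unfolding v_def using abc k by (simp add: cj_K)
  have "L (sp i \<one>\<^bsub>E\<^esub> v) = grp_comm E k (CC i \<otimes>\<^bsub>E\<^esub> inv\<^bsub>E\<^esub> (BB i))"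
    unfolding L_sp[OF i K_one v] using abc k K_carr
    by (simp add: v_def cj_def grp_comm_def gs)
  then show ?thesis using sp_carr[OF i K_one v] by (metis image_eqI)
qed

definition "TT = {g \<in> carrier E. \<forall>k\<in>K. grp_comm E k g \<in> II}"

lemma TT_sub: "subgroup TT E"
proof (rule E.subgroupI)
  show "TT \<subseteq> carrier E" by (auto simp: TT_def)
  have "\<one>\<^bsub>E\<^esub> \<in> TT" using II_one K_carr by (auto simp: TT_def grp_comm_def)
  then show "TT \<noteq> {}" by blast
next
  fix g assume g: "g \<in> TT"
  then have gc: "g \<in> carrier E" by (simp add: TT_def)
  show "inv\<^bsub>E\<^esub> g \<in> TT"
  proof (unfold TT_def, intro CollectI conjI ballI)
    show "inv\<^bsub>E\<^esub> g \<in> carrier E" using gc by simp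
    fix k assume k: "k \<in> K"
    have k': "cj (inv\<^bsub>E\<^esub> g) k \<in> K" using k gc by (simp add: cj_K)
    have "grp_comm E k (inv\<^bsub>E\<^esub> g) = inv\<^bsub>E\<^esub> (grp_comm E (cj (inv\<^bsub>E\<^esub> g) k) g)"
      using k gc K_carr by (simp add: cj_def grp_comm_def gs)
    then show "grp_comm E k (inv\<^bsub>E\<^esub> g) \<in> II" using g k' II_inv by (simp add: TT_def)
  qed
next
  fix g g' assume g: "g \<in> TT" and g': "g' \<in> TT"
  then have gc: "g \<in> carrier E" "g' \<in> carrier E" by (auto simp: TT_def)
  show "g \<otimes>\<^bsub>E\<^esub> g' \<in> TT"
  proof (unfold TT_def, intro CollectI conjI ballI)
    show "g \<otimes>\<^bsub>E\<^esub> g' \<in> carrier E" using gc by simp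
    fix k assume k: "k \<in> K"
    have k': "cj g' k \<in> K" using k gc by (simp add: cj_K)
    have "grp_comm E k (g \<otimes>\<^bsub>E\<^esub> g') = grp_comm E k g' \<otimes>\<^bsub>E\<^esub> grp_comm E (cj g' k) g"
      using k gc K_carr by (simp add: cj_def grp_comm_def gs)
    then show "grp_comm E k (g \<otimes>\<^bsub>E\<^esub> g') \<in> II" using g g' k k' II_mult by (simp add: TT_def)
  qed
qed

lemma K_TT: "K \<subseteq> TT"
proof
  fix k' assume k': "k' \<in> K"
  have "\<forall>k\<in>K. grp_comm E k k' = \<one>\<^bsub>E\<^esub>"
  proof
    fix k assume k: "k \<in> K"
    have "grp_comm E k k' = k' \<otimes>\<^bsub>E\<^esub> k \<otimes>\<^bsub>E\<^esub> inv\<^bsub>E\<^esub> k \<otimes>\<^bsub>E\<^esub> inv\<^bsub>E\<^esub> k'"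
      unfolding grp_comm_def using K_commute[OF k k'] by simp
    also have "\<dots> = \<one>\<^bsub>E\<^esub>" using k k' K_carr by (simp add: gs)
    finally show "grp_comm E k k' = \<one>\<^bsub>E\<^esub>" .
  qed
  then show "k' \<in> TT" using k' K_carr II_one by (auto simp: TT_def)
qed

definition "PG i = surf_rel G x y i"
definition "cG i = PG i \<otimes>\<^bsub>G\<^esub> x i \<otimes>\<^bsub>G\<^esub> y i \<otimes>\<^bsub>G\<^esub> inv\<^bsub>G\<^esub> (x i) \<otimes>\<^bsub>G\<^esub> inv\<^bsub>G\<^esub> (PG i)"
definition "dG i = PG i \<otimes>\<^bsub>G\<^esub> x i \<otimes>\<^bsub>G\<^esub> y i \<otimes>\<^bsub>G\<^esub> inv\<^bsub>G\<^esub> (x i) \<otimes>\<^bsub>G\<^esub> inv\<^bsub>G\<^esub> (y i) \<otimes>\<^bsub>G\<^esub> inv\<^bsub>G\<^esub> (x i) \<otimes>\<^bsub>G\<^esub> inv\<^bsub>G\<^esub> (PG i)"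

lemma PG_carr: "i \<le> h \<Longrightarrow> PG i \<in> carrier G"
  unfolding PG_def by (rule G.surf_rel_closed) (auto simp: x_carr y_carr)

lemma q_Rn: "n \<le> h \<Longrightarrow> q (Rn n) = PG n"
proof -
  assume n: "n \<le> h"
  have lt: "\<And>i. i < n \<Longrightarrow> i < h" using n by linarith
  have "q (Rn n) = surf_rel G (\<lambda>i. q (x0 i)) (\<lambda>i. q (y0 i)) n"
    unfolding Rn_def using lt x0_carr y0_carr by (intro q_surf_rel) blast
  also have "\<dots> = surf_rel G x y n"
    using lt q_x0 q_y0 by (intro surf_rel_cong) blast
  finally show ?thesis by (simp add: PG_def)
qed

lemma q_c: "i < h \<Longrightarrow> q (BB i \<otimes>\<^bsub>E\<^esub> inv\<^bsub>E\<^esub> (AA i)) = cG i"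
  using Rn_carr[of i] x0_carr[of i] y0_carr[of i] q_Rn[of i] q_x0[of i] q_y0[of i] PG_carr[of i] x_carr[of i] y_carr[of i]
  by (simp add: AA_def BB_def cG_def qs Gs)

lemma q_d: "i < h \<Longrightarrow> q (CC i \<otimes>\<^bsub>E\<^esub> inv\<^bsub>E\<^esub> (BB i)) = dG i"
  using Rn_carr[of i] x0_carr[of i] y0_carr[of i] q_Rn[of i] q_x0[of i] q_y0[of i] PG_carr[of i] x_carr[of i] y_carr[of i]
  by (simp add: BB_def CC_def dG_def qs Gs)

end

context ext2 begin

abbreviation "SS \<equiv> cG ` {..<h} \<union> dG ` {..<h}"

lemma cG_carr: "i < h \<Longrightarrow> cG i \<in> carrier G"
  using PG_carr[of i] x_carr[of i] y_carr[of i] by (simp add: cG_def)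
lemma dG_carr: "i < h \<Longrightarrow> dG i \<in> carrier G"
  using PG_carr[of i] x_carr[of i] y_carr[of i] by (simp add: dG_def)

lemma SS_carr: "SS \<subseteq> carrier G" using cG_carr dG_carr by auto

lemma Hs_sub: "subgroup (generate G SS) G"
  by (rule G.generate_is_subgroup[OF SS_carr])

lemma x_expr: assumes i: "i < h"
  shows "x i = inv\<^bsub>G\<^esub> ((inv\<^bsub>G\<^esub> (inv\<^bsub>G\<^esub> (PG i) \<otimes>\<^bsub>G\<^esub> cG i \<otimes>\<^bsub>G\<^esub> PG i) \<otimes>\<^bsub>G\<^esub> (inv\<^bsub>G\<^esub> (PG i) \<otimes>\<^bsub>G\<^esub> dG i \<otimes>\<^bsub>G\<^esub> PG i))
     \<otimes>\<^bsub>G\<^esub> (inv\<^bsub>G\<^esub> (PG i) \<otimes>\<^bsub>G\<^esub> cG i \<otimes>\<^bsub>G\<^esub> PG i))"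
  using PG_carr[of i] x_carr[OF i] y_carr[OF i] i by (simp add: cG_def dG_def Gs)

lemma y_expr: assumes i: "i < h"
  shows "y i = ((inv\<^bsub>G\<^esub> (inv\<^bsub>G\<^esub> (PG i) \<otimes>\<^bsub>G\<^esub> cG i \<otimes>\<^bsub>G\<^esub> PG i) \<otimes>\<^bsub>G\<^esub> (inv\<^bsub>G\<^esub> (PG i) \<otimes>\<^bsub>G\<^esub> dG i \<otimes>\<^bsub>G\<^esub> PG i))
     \<otimes>\<^bsub>G\<^esub> (inv\<^bsub>G\<^esub> (PG i) \<otimes>\<^bsub>G\<^esub> cG i \<otimes>\<^bsub>G\<^esub> PG i)) \<otimes>\<^bsub>G\<^esub> 
     inv\<^bsub>G\<^esub> (inv\<^bsub>G\<^esub> (inv\<^bsub>G\<^esub> (PG i) \<otimes>\<^bsub>G\<^esub> cG i \<otimes>\<^bsub>G\<^esub> PG i) \<otimes>\<^bsub>G\<^esub> (inv\<^bsub>G\<^esub> (PG i) \<otimes>\<^bsub>G\<^esub> dG i \<otimes>\<^bsub>G\<^esub> PG i))"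
  using PG_carr[of i] x_carr[OF i] y_carr[OF i] i by (simp add: cG_def dG_def Gs)

lemma xy_in_Hs: "n \<le> h \<Longrightarrow> \<forall>j<n. x j \<in> generate G SS \<and> y j \<in> generate G SS"
proof (induction n)
  case 0 then show ?case by simp
next
  case (Suc n)
  then have n: "n < h" and ih: "\<forall>j<n. x j \<in> generate G SS \<and> y j \<in> generate G SS" by auto
  let ?H = "generate G SS"
  have P: "PG n \<in> ?H" unfolding PG_def
    by (rule G.surf_rel_sub[OF Hs_sub]) (use ih in auto)
  have c: "cG n \<in> ?H" using n by (intro generate.incl) auto
  have d: "dG n \<in> ?H" using n by (intro generate.incl) auto
  note cl = subgroup.m_closed[OF Hs_sub] subgroup.m_inv_closed[OF Hs_sub]
  have "x n \<in> ?H" unfolding x_expr[OF n] using P c d cl by metis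
  moreover have "y n \<in> ?H" unfolding y_expr[OF n] using P c d cl by metis
  ultimately show ?case using ih less_Suc_eq by auto
qed

lemma Hs_all: "generate G SS = carrier G"
proof
  show "generate G SS \<subseteq> carrier G" using subgroup.subset[OF Hs_sub] .
  have "x ` {..<h} \<union> y ` {..<h} \<subseteq> generate G SS" using xy_in_Hs[of h] by auto
  then have "generate G (x ` {..<h} \<union> y ` {..<h}) \<subseteq> generate G SS"
    by (rule G.generate_subgroup_incl[OF _ Hs_sub])
  then show "carrier G \<subseteq> generate G SS" using gen by simp
qed

lemma TT_all: "TT = carrier E"
proof
  show "TT \<subseteq> carrier E" using subgroup.subset[OF TT_sub] .
  have qT: "subgroup (q ` TT) G" using group_hom.subgroup_img_is_subgroup[OF gh TT_sub] .
  have "SS \<subseteq> q ` TT"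
  proof
    fix s assume "s \<in> SS"
    then obtain i where i: "i < h" and s: "s = cG i \<or> s = dG i" by auto
    have abc: "AA i \<in> carrier E" "BB i \<in> carrier E" "CC i \<in> carrier E" using ABC_carr[OF i] by auto
    have "BB i \<otimes>\<^bsub>E\<^esub> inv\<^bsub>E\<^esub> (AA i) \<in> TT" using comm_c[OF i] abc by (simp add: TT_def)
    moreover have "CC i \<otimes>\<^bsub>E\<^esub> inv\<^bsub>E\<^esub> (BB i) \<in> TT" using comm_d[OF i] abc by (simp add: TT_def)
    ultimately show "s \<in> q ` TT" using s q_c[OF i] q_d[OF i] by (metis image_eqI)
  qed
  then have "generate G SS \<subseteq> q ` TT" by (rule G.generate_subgroup_incl[OF _ qT])
  then have all: "carrier G \<subseteq> q ` TT" using Hs_all by simp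
  show "carrier E \<subseteq> TT"
  proof
    fix g assume g: "g \<in> carrier E"
    then obtain t where t: "t \<in> TT" "q t = q g" using all q_carr by (metis imageE subsetD)
    have tc: "t \<in> carrier E" using t TT_def by auto
    have "g \<otimes>\<^bsub>E\<^esub> inv\<^bsub>E\<^esub> t \<in> K" using g tc t by (simp add: inK qs)
    then have "g \<otimes>\<^bsub>E\<^esub> inv\<^bsub>E\<^esub> t \<in> TT" using K_TT by blast
    then have "(g \<otimes>\<^bsub>E\<^esub> inv\<^bsub>E\<^esub> t) \<otimes>\<^bsub>E\<^esub> t \<in> TT" using t subgroup.m_closed[OF TT_sub] by blast
    then show "g \<in> TT" using g tc by (simp add: gs)
  qed
qed

lemma II_eq_C: "II = C"
proof
  show "II \<subseteq> C" by (rule II_C)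
  have "Cgen \<subseteq> II" using TT_all by (auto simp: Cgen_def TT_def)
  then show "C \<subseteq> II" unfolding C_def' by (rule E.generate_subgroup_incl[OF _ II_sub])
qed

end

lemma (in group_hom) fiber_eq:
  assumes a: "a \<in> carrier G"
  shows "{g \<in> carrier G. h g = h a} = kernel G H h #> a"
proof -
  have sk: "subgroup (kernel G H h) G" by (rule subgroup_kernel)
  show ?thesis
  proof (intro equalityI subsetI)
    fix g assume "g \<in> {g \<in> carrier G. h g = h a}"
    then have g: "g \<in> carrier G" "h g = h a" by auto
    then have "g \<otimes> inv a \<in> kernel G H h" using a by (simp add: kernel_def)
    then show "g \<in> kernel G H h #> a"
      using subgroup.rcos_module[OF sk G.group_axioms a g(1)] by simp
  next
    fix g assume g: "g \<in> kernel G H h #> a"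
    then have gc: "g \<in> carrier G" using a G.r_coset_subset_G subgroup.subset[OF sk] by blast
    then have "g \<otimes> inv a \<in> kernel G H h" using subgroup.rcos_module[OF sk G.group_axioms a gc] g by simp
    then have "h g \<otimes>\<^bsub>H\<^esub> inv\<^bsub>H\<^esub> h a = \<one>\<^bsub>H\<^esub>" using a gc by (simp add: kernel_def)
    then have "h g = h a" using a gc by (metis H.inv_equality H.inv_inv H.r_inv H.inv_closed hom_closed H.inv_solve_right' H.l_one)
    then show "g \<in> {g \<in> carrier G. h g = h a}" using gc by simp
  qed
qed

lemma (in group_hom) fiber_card:
  assumes a: "a \<in> carrier G"
  shows "card {g \<in> carrier G. h g = h a} = card (kernel G H h)"
proof -
  have sk: "subgroup (kernel G H h) G" by (rule subgroup_kernel)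
  have "kernel G H h #> a \<in> rcosets (kernel G H h)" using a by (auto simp: RCOSETS_def)
  then show ?thesis unfolding fiber_eq[OF a]
    using G.card_rcosets_equal subgroup.subset[OF sk] by metis
qed

lemma (in group_hom) card_img_ker:
  assumes fin: "finite (carrier G)"
  shows "card (h ` carrier G) * card (kernel G H h) = card (carrier G)"
proof -
  have eq: "carrier G = (\<Union>c\<in>h ` carrier G. {g \<in> carrier G. h g = c})" by auto
  have "card (carrier G) = (\<Sum>c\<in>h ` carrier G. card {g \<in> carrier G. h g = c})"
    by (subst eq, rule card_UN_disjoint) (use fin in auto)
  also have "\<dots> = (\<Sum>c\<in>h ` carrier G. card (kernel G H h))"
    by (rule sum.cong) (auto simp: fiber_card)
  finally show ?thesis by simp
qed

context ext2 begin

lemma HH_fin: "finite (carrier HH)"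
  using K_fin by (simp add: finite_PiE)

lemma HH_card: "card (carrier HH) = card K ^ (2*h)"
  by (simp add: card_PiE)

definition "Psi \<gamma> = (\<lambda>i\<in>{..<h}. Xg \<gamma> i, \<lambda>i\<in>{..<h}. Yg \<gamma> i)"

lemma R0_carr: "Rn h \<in> carrier E" using Rn_carr by simp

lemma rel_Psi: assumes g: "\<gamma> \<in> carrier HH"
  shows "surf_rel E (fst (Psi \<gamma>)) (snd (Psi \<gamma>)) h = L \<gamma> \<otimes>\<^bsub>E\<^esub> Rn h"
proof -
  have "surf_rel E (fst (Psi \<gamma>)) (snd (Psi \<gamma>)) h = surf_rel E (Xg \<gamma>) (Yg \<gamma>) h"
    by (rule surf_rel_cong) (simp add: Psi_def)
  also have "\<dots> = L \<gamma> \<otimes>\<^bsub>E\<^esub> Rn h"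
    using SX_carr[OF g] R0_carr by (simp add: L_def Ln_def gs)
  finally show ?thesis .
qed

lemma lifts_eq: "lifts E q h x y = Psi ` {\<gamma> \<in> carrier HH. L \<gamma> = inv\<^bsub>E\<^esub> (Rn h)}"
proof (rule Set.set_eqI, rule iffI)
  fix p assume p: "p \<in> Psi ` {\<gamma> \<in> carrier HH. L \<gamma> = inv\<^bsub>E\<^esub> (Rn h)}"
  then obtain \<gamma> where g: "\<gamma> \<in> carrier HH" "L \<gamma> = inv\<^bsub>E\<^esub> (Rn h)" and pg: "p = Psi \<gamma>" by auto
  have r: "surf_rel E (fst p) (snd p) h = \<one>\<^bsub>E\<^esub>"
    using rel_Psi[OF g(1)] g(2) R0_carr pg by simp
  have "fst p \<in> {..<h} \<rightarrow>\<^sub>E carrier E" "snd p \<in> {..<h} \<rightarrow>\<^sub>E carrier E"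
    using X_carr[OF g(1)] Y_carr[OF g(1)] by (auto simp: pg Psi_def)
  moreover have "\<forall>i<h. q (fst p i) = x i \<and> q (snd p i) = y i"
    using q_X[OF g(1)] q_Y[OF g(1)] by (auto simp: pg Psi_def)
  ultimately show "p \<in> lifts E q h x y" using r
    by (cases p) (auto simp: lifts_def surf_hom_def)
next
  fix p assume p: "p \<in> lifts E q h x y"
  obtain x' y' where pxy: "p = (x', y')" by (cases p)
  have x': "x' \<in> {..<h} \<rightarrow>\<^sub>E carrier E" and y': "y' \<in> {..<h} \<rightarrow>\<^sub>E carrier E"
    and r: "surf_rel E x' y' h = \<one>\<^bsub>E\<^esub>" and qx: "\<forall>i<h. q (x' i) = x i \<and> q (y' i) = y i"
    using p pxy by (auto simp: lifts_def surf_hom_def)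
  define \<gamma> where "\<gamma> = (\<lambda>j\<in>{..<2*h}. if j < h then inv\<^bsub>E\<^esub> (x0 j) \<otimes>\<^bsub>E\<^esub> x' j
                                      else inv\<^bsub>E\<^esub> (y0 (j - h)) \<otimes>\<^bsub>E\<^esub> y' (j - h))"
  have gK: "\<gamma> \<in> carrier HH"
  proof -
    have "\<gamma> j \<in> K" if j: "j < 2*h" for j
    proof (cases "j < h")
      case True
      then show ?thesis using x' qx x0_carr q_x0 x_carr j
        by (auto simp: \<gamma>_def inK qs PiE_iff)
    next
      case False
      then have "j - h < h" using j by simp
      then show ?thesis using y' qx y0_carr q_y0 y_carr j False
        by (auto simp: \<gamma>_def inK qs PiE_iff)
    qed
    then show ?thesis by (auto simp: \<gamma>_def)
  qed
  have "Psi \<gamma> = (x', y')"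
  proof -
    have "(\<lambda>i\<in>{..<h}. Xg \<gamma> i) = x'"
    proof
      fix i show "(\<lambda>i\<in>{..<h}. Xg \<gamma> i) i = x' i"
        using x' x0_carr by (cases "i < h") (auto simp: Xg_def \<gamma>_def PiE_iff extensional_def)
    qed
    moreover have "(\<lambda>i\<in>{..<h}. Yg \<gamma> i) = y'"
    proof
      fix i show "(\<lambda>i\<in>{..<h}. Yg \<gamma> i) i = y' i"
        using y' y0_carr by (cases "i < h") (auto simp: Yg_def \<gamma>_def PiE_iff extensional_def)
    qed
    ultimately show ?thesis by (simp add: Psi_def)
  qed
  moreover have "L \<gamma> = inv\<^bsub>E\<^esub> (Rn h)"
  proof -
    have "L \<gamma> \<otimes>\<^bsub>E\<^esub> Rn h = \<one>\<^bsub>E\<^esub>" using rel_Psi[OF gK] r \<open>Psi \<gamma> = (x', y')\<close> by simp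
    then show ?thesis using Ln_K[OF gK, of h] K_carr R0_carr
      by (metis E.inv_equality L_def order_refl E.inv_inv E.inv_closed)
  qed
  ultimately show "p \<in> Psi ` {\<gamma> \<in> carrier HH. L \<gamma> = inv\<^bsub>E\<^esub> (Rn h)}" using gK pxy
    by (metis (mono_tags, lifting) image_eqI mem_Collect_eq)
qed

lemma Psi_inj: "inj_on Psi (carrier HH)"
proof (rule inj_onI)
  fix \<gamma> \<delta> assume g: "\<gamma> \<in> carrier HH" and d: "\<delta> \<in> carrier HH" and e: "Psi \<gamma> = Psi \<delta>"
  show "\<gamma> = \<delta>"
  proof
    fix j
    show "\<gamma> j = \<delta> j"
    proof (cases "j < 2*h")
      case False
      then show ?thesis using g d by (auto simp: PiE_iff extensional_def)
    next
      case True
      show ?thesis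
      proof (cases "j < h")
        case jh: True
        have "fst (Psi \<gamma>) j = fst (Psi \<delta>) j" using e by simp
        then have "Xg \<gamma> j = Xg \<delta> j" using jh by (simp add: Psi_def)
        then show ?thesis using gam_K1[OF g jh] gam_K1[OF d jh] K_carr x0_carr[OF jh]
          by (simp add: Xg_def)
      next
        case False
        define i where "i = j - h"
        have j: "j = h + i" using False by (simp add: i_def)
        have i: "i < h" using True False by (simp add: i_def)
        have "snd (Psi \<gamma>) i = snd (Psi \<delta>) i" using e by simp
        then have "Yg \<gamma> i = Yg \<delta> i" using i by (simp add: Psi_def)
        then show ?thesis using gam_K2[OF g i] gam_K2[OF d i] K_carr y0_carr[OF i] j
          by (simp add: Yg_def)
      qed
    qed
  qed
qed

lemma card_lifts: "card (lifts E q h x y) = card {\<gamma> \<in> carrier HH. L \<gamma> = inv\<^bsub>E\<^esub> (Rn h)}"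
  unfolding lifts_eq by (rule card_image) (rule inj_on_subset[OF Psi_inj], auto)

lemma R0_K: "Rn h \<in> K"
  using q_Rn[of h] R0_carr rel by (simp add: inK PG_def)

lemma lifts_iff_C: "lifts E q h x y \<noteq> {} \<longleftrightarrow> Rn h \<in> C"
proof -
  have "lifts E q h x y \<noteq> {} \<longleftrightarrow> {\<gamma> \<in> carrier HH. L \<gamma> = inv\<^bsub>E\<^esub> (Rn h)} \<noteq> {}"
    unfolding lifts_eq by (simp only: image_is_empty)
  also have "\<dots> \<longleftrightarrow> inv\<^bsub>E\<^esub> (Rn h) \<in> II"
  proof
    assume "{\<gamma> \<in> carrier HH. L \<gamma> = inv\<^bsub>E\<^esub> (Rn h)} \<noteq> {}"
    then obtain \<gamma> where g: "\<gamma> \<in> carrier HH" "L \<gamma> = inv\<^bsub>E\<^esub> (Rn h)" by blast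
    show "inv\<^bsub>E\<^esub> (Rn h) \<in> II" by (rule image_eqI[where f=L, OF g(2)[symmetric] g(1)])
  next
    assume "inv\<^bsub>E\<^esub> (Rn h) \<in> II"
    then obtain \<gamma> where g: "\<gamma> \<in> carrier HH" "inv\<^bsub>E\<^esub> (Rn h) = L \<gamma>" by (rule imageE) blast
    then have "\<gamma> \<in> {\<gamma> \<in> carrier HH. L \<gamma> = inv\<^bsub>E\<^esub> (Rn h)}" by simp
    then show "{\<gamma> \<in> carrier HH. L \<gamma> = inv\<^bsub>E\<^esub> (Rn h)} \<noteq> {}" by blast
  qed
  also have "\<dots> \<longleftrightarrow> Rn h \<in> C"
  proof
    assume "inv\<^bsub>E\<^esub> (Rn h) \<in> II"
    then have "inv\<^bsub>E\<^esub> (inv\<^bsub>E\<^esub> (Rn h)) \<in> C" using II_eq_C subgroup.m_inv_closed[OF C_sub] by blast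
    then show "Rn h \<in> C" using R0_carr by simp
  next
    assume "Rn h \<in> C"
    then show "inv\<^bsub>E\<^esub> (Rn h) \<in> II" using II_eq_C subgroup.m_inv_closed[OF C_sub] by blast
  qed
  finally show ?thesis .
qed

lemma count: assumes ne: "lifts E q h x y \<noteq> {}"
  shows "real (card (lifts E q h x y)) = real (card K) ^ (2 * h) / real (card C)"
proof -
  have "{\<gamma> \<in> carrier HH. L \<gamma> = inv\<^bsub>E\<^esub> (Rn h)} \<noteq> {}"
    using ne unfolding lifts_eq image_is_empty .
  then obtain \<gamma>0 where g0: "\<gamma>0 \<in> carrier HH" "L \<gamma>0 = inv\<^bsub>E\<^esub> (Rn h)" by blast
  have "card (lifts E q h x y) = card (kernel HH Kg L)"
    unfolding card_lifts using group_hom.fiber_card[OF L_group_hom g0(1)] g0(2) by simp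
  moreover have "card C * card (kernel HH Kg L) = card K ^ (2*h)"
    using group_hom.card_img_ker[OF L_group_hom HH_fin] II_eq_C HH_card by simp
  moreover have "card C > 0"
    using C_K K_fin subgroup.one_closed[OF C_sub] by (metis card_gt_0_iff empty_iff finite_subset)
  ultimately show ?thesis
    by (metis (mono_tags, lifting) nonzero_mult_div_cancel_left of_nat_0_less_iff of_nat_mult of_nat_power order_less_irrefl)
qed

end

definition d4 :: "'i set \<Rightarrow> ('i \<Rightarrow> 'x) \<Rightarrow> ('i \<Rightarrow> 'x) \<Rightarrow> ('i \<Rightarrow> 'x) \<Rightarrow> ('i \<Rightarrow> 'x) \<Rightarrow> 'x \<Rightarrow> int" where
  "d4 I A B Cc D = (\<lambda>p. \<Sum>i\<in>I. of_bool (p = A i) + of_bool (p = B i) - of_bool (p = Cc i) - of_bool (p = D i))"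

lemma d4_supp: "supp (d4 I A B Cc D) \<subseteq> A ` I \<union> B ` I \<union> Cc ` I \<union> D ` I"
proof
  fix p assume p: "p \<in> supp (d4 I A B Cc D)"
  show "p \<in> A ` I \<union> B ` I \<union> Cc ` I \<union> D ` I"
  proof (rule ccontr)
    assume "p \<notin> A ` I \<union> B ` I \<union> Cc ` I \<union> D ` I"
    then have "\<forall>i\<in>I. p \<noteq> A i \<and> p \<noteq> B i \<and> p \<noteq> Cc i \<and> p \<noteq> D i" by auto
    then have "d4 I A B Cc D p = 0" by (simp add: d4_def)
    then show False using p by (simp add: supp_def)
  qed
qed

lemma d4_fin: "finite I \<Longrightarrow> finite (supp (d4 I A B Cc D))"
  by (rule finite_subset[OF d4_supp]) auto

lemma sum_delta_mult: "finite S \<Longrightarrow> a \<in> S \<Longrightarrow> (\<Sum>p\<in>S. of_bool (p = a) * (F p :: int)) = F a"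
proof -
  assume S: "finite S" and a: "a \<in> S"
  have "(\<Sum>p\<in>S. of_bool (p = a) * F p) = (\<Sum>p\<in>S. if p = a then F p else 0)"
    by (rule sum.cong) auto
  also have "\<dots> = F a" using S a by simp
  finally show ?thesis .
qed

lemma lin4:
  fixes F :: "'x \<Rightarrow> int"
  assumes I: "finite I"
  shows "(\<Sum>p\<in>supp (d4 I A B Cc D). d4 I A B Cc D p * F p) = (\<Sum>i\<in>I. F (A i) + F (B i) - F (Cc i) - F (D i))"
proof -
  let ?S = "A ` I \<union> B ` I \<union> Cc ` I \<union> D ` I"
  have S: "finite ?S" using I by auto
  have "(\<Sum>p\<in>supp (d4 I A B Cc D). d4 I A B Cc D p * F p) = (\<Sum>p\<in>?S. d4 I A B Cc D p * F p)"
    by (rule sum.mono_neutral_left[OF S d4_supp]) (auto simp: supp_def)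
  also have "\<dots> = (\<Sum>p\<in>?S. \<Sum>i\<in>I. (of_bool (p = A i) + of_bool (p = B i) - of_bool (p = Cc i) - of_bool (p = D i)) * F p)"
    by (simp add: d4_def sum_distrib_right)
  also have "\<dots> = (\<Sum>i\<in>I. \<Sum>p\<in>?S. (of_bool (p = A i) + of_bool (p = B i) - of_bool (p = Cc i) - of_bool (p = D i)) * F p)"
    by (rule sum.swap)
  also have "\<dots> = (\<Sum>i\<in>I. F (A i) + F (B i) - F (Cc i) - F (D i))"
  proof (rule sum.cong[OF refl])
    fix i assume i: "i \<in> I"
    have "(\<Sum>p\<in>?S. (of_bool (p = A i) + of_bool (p = B i) - of_bool (p = Cc i) - of_bool (p = D i)) * F p)
       = (\<Sum>p\<in>?S. of_bool (p = A i) * F p) + (\<Sum>p\<in>?S. of_bool (p = B i) * F p)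
         - (\<Sum>p\<in>?S. of_bool (p = Cc i) * F p) - (\<Sum>p\<in>?S. of_bool (p = D i) * F p)"
      by (simp add: algebra_simps sum.distrib sum_subtractf)
    also have "\<dots> = F (A i) + F (B i) - F (Cc i) - F (D i)"
      using i S by (simp add: sum_delta_mult)
    finally show "(\<Sum>p\<in>?S. (of_bool (p = A i) + of_bool (p = B i) - of_bool (p = Cc i) - of_bool (p = D i)) * F p)
       = F (A i) + F (B i) - F (Cc i) - F (D i)" .
  qed
  finally show ?thesis .
qed

context comm_group begin

lemma Phi_diff:
  assumes w: "\<And>p. w p \<in> carrier G" and f: "finite (supp c)" "finite (supp d)"
  shows "Phi G w (\<lambda>p. c p - d p) = Phi G w c \<otimes> inv (Phi G w d)"
proof -
  have fd: "finite (supp (\<lambda>p. (-1) * d p))" using f by (simp add: supp_def)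
  have "Phi G w (\<lambda>p. c p - d p) = Phi G w (\<lambda>p. c p + (-1) * d p)" by simp
  also have "\<dots> = Phi G w c \<otimes> Phi G w (\<lambda>p. (-1) * d p)"
    by (rule Phi_add[where w=w, OF w f(1) fd])
  also have "Phi G w (\<lambda>p. (-1) * d p) = inv (Phi G w d)"
  proof -
    have pc: "Phi G w d \<in> carrier G" by (rule Phi_closed) (rule w)
    have "Phi G w (\<lambda>p. (-1) * d p) = Phi G w d [^] (-1::int)" by (rule Phi_scale[where w=w, OF w f(2)])
    also have "\<dots> = inv (Phi G w d [^] (1::int))" by (rule int_pow_neg[OF pc])
    finally show ?thesis using pc by simp
  qed
  finally show ?thesis .
qed

lemma supp_delta_fin: "finite (supp (\<lambda>p. of_bool (p = t) :: int))"
  by (rule finite_subset[of _ "{t}"]) (auto simp: supp_def)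
lemma supp_delta_fin': "finite (supp (\<lambda>p. of_bool (t = p) :: int))"
  by (rule finite_subset[of _ "{t}"]) (auto simp: supp_def)

lemma Phi_delta':
  assumes w: "\<And>p. w p \<in> carrier G"
  shows "Phi G w (\<lambda>p. of_bool (t = p)) = w t"
  using Phi_delta[where w=w, OF w, of t] by (simp add: eq_commute)

lemma Phi_d4:
  assumes w: "\<And>p. w p \<in> carrier G" and I: "finite I"
  shows "Phi G w (d4 I A B Cc D) = (\<Otimes>i\<in>I. w (A i) \<otimes> w (B i) \<otimes> inv (w (Cc i)) \<otimes> inv (w (D i)))"
proof -
  have "Phi G w (d4 I A B Cc D) = (\<Otimes>i\<in>I. Phi G w (\<lambda>p. of_bool (p = A i) + of_bool (p = B i) - of_bool (p = Cc i) - of_bool (p = D i)))"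
    unfolding d4_def
  proof (rule Phi_sum[where w=w, OF w I])
    fix i show "finite (supp (\<lambda>p. of_bool (p = A i) + of_bool (p = B i) - of_bool (p = Cc i) - of_bool (p = D i) :: int))"
      by (rule finite_subset[of _ "{A i, B i, Cc i, D i}"]) (auto simp: supp_def)
  qed
  also have "\<dots> = (\<Otimes>i\<in>I. w (A i) \<otimes> w (B i) \<otimes> inv (w (Cc i)) \<otimes> inv (w (D i)))"
  proof (rule finprod_cong')
    fix i assume "i \<in> I"
    have f2: "finite (supp (\<lambda>p. of_bool (p = A i) + of_bool (p = B i) :: int))"
      by (rule finite_subset[of _ "{A i, B i}"]) (auto simp: supp_def)
    have f3: "finite (supp (\<lambda>p. of_bool (p = A i) + of_bool (p = B i) - of_bool (p = Cc i) :: int))"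
      by (rule finite_subset[of _ "{A i, B i, Cc i}"]) (auto simp: supp_def)
    show "Phi G w (\<lambda>p. of_bool (p = A i) + of_bool (p = B i) - of_bool (p = Cc i) - of_bool (p = D i)) =
          w (A i) \<otimes> w (B i) \<otimes> inv (w (Cc i)) \<otimes> inv (w (D i))"
      using w by (simp add: Phi_diff[where w=w, OF w f3 supp_delta_fin] Phi_diff[where w=w, OF w f2 supp_delta_fin]
          Phi_add[where w=w, OF w supp_delta_fin supp_delta_fin] Phi_delta[where w=w, OF w])
  qed (auto simp: w)
  finally show ?thesis .
qed

end


lemma surf_cycle_d4: "surf_cycle M x y h = d4 {..<h} (\<lambda>i. (surf_rel M x y i, x i))
   (\<lambda>i. (surf_rel M x y i \<otimes>\<^bsub>M\<^esub> x i, y i))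
   (\<lambda>i. (surf_rel M x y i \<otimes>\<^bsub>M\<^esub> x i \<otimes>\<^bsub>M\<^esub> y i \<otimes>\<^bsub>M\<^esub> inv\<^bsub>M\<^esub> x i, x i))
   (\<lambda>i. (surf_rel M x y (Suc i), y i))"
  by (simp add: surf_cycle_def d4_def Let_def)

definition DD :: "('a, 'm) monoid_scheme \<Rightarrow> 'a \<Rightarrow> 'a \<times> 'a \<Rightarrow> int" where
  "DD M z p = of_bool (snd p = z) - of_bool (fst p \<otimes>\<^bsub>M\<^esub> snd p = z) + of_bool (fst p = z)"

lemma bd2_alt: "bd2 M c z = (\<Sum>p\<in>supp c. c p * DD M z p)"
  by (simp add: bd2_def DD_def)

lemma push2_alt: "finite (supp c) \<Longrightarrow> push2 f c z = (\<Sum>p\<in>supp c. c p * of_bool ((f (fst p), f (snd p)) = z))"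
  unfolding push2_def by (simp add: sum.inter_filter if_distrib of_bool_def cong: if_cong)

lemma (in group) DD_block:
  assumes c: "P \<in> carrier G" "a \<in> carrier G" "b \<in> carrier G"
  shows "DD G z (P, a) + DD G z (P \<otimes> a, b) - DD G z (P \<otimes> a \<otimes> b \<otimes> inv a, a)
     - DD G z (P \<otimes> grp_comm G a b, b) = of_bool (P = z) - of_bool (P \<otimes> grp_comm G a b = z)"
proof -
  have 1: "P \<otimes> a \<otimes> b \<otimes> inv a \<otimes> a = P \<otimes> a \<otimes> b" using c by (simp add: m_assoc)
  have 2: "P \<otimes> grp_comm G a b \<otimes> b = P \<otimes> a \<otimes> b \<otimes> inv a" using c by (simp add: m_assoc grp_comm_def)
  show ?thesis unfolding DD_def fst_conv snd_conv 1 2 by linarith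
qed

lemma (in group) surf_cycle_cycle:
  assumes c: "\<And>i. i < h \<Longrightarrow> x i \<in> carrier G \<and> y i \<in> carrier G" and r: "surf_rel G x y h = \<one>"
  shows "surf_cycle G x y h \<in> cycles2 G"
proof -
  let ?P = "surf_rel G x y"
  have cx: "\<And>i. i < h \<Longrightarrow> x i \<in> carrier G" and cy: "\<And>i. i < h \<Longrightarrow> y i \<in> carrier G"
    using c by auto
  have Pc: "\<And>i. i \<le> h \<Longrightarrow> ?P i \<in> carrier G"
  proof -
    fix i assume i: "i \<le> h"
    show "?P i \<in> carrier G"
    proof (rule surf_rel_closed)
      fix j assume "j < i" then have "j < h" using i by linarith
      then show "x j \<in> carrier G \<and> y j \<in> carrier G" using cx cy by blast
    qed
  qed
  have Pc1: "\<And>i. i < h \<Longrightarrow> ?P i \<in> carrier G" using Pc less_imp_le by blast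
  have Pc2: "\<And>i. i < h \<Longrightarrow> ?P (Suc i) \<in> carrier G" using Pc Suc_leI by blast
  have pts: "(\<lambda>i. (?P i, x i)) ` {..<h} \<union> (\<lambda>i. (?P i \<otimes> x i, y i)) ` {..<h}
     \<union> (\<lambda>i. (?P i \<otimes> x i \<otimes> y i \<otimes> inv x i, x i)) ` {..<h} \<union> (\<lambda>i. (?P (Suc i), y i)) ` {..<h}
     \<subseteq> carrier G \<times> carrier G"
    using cx cy Pc1 Pc2 by auto
  have supp: "supp (surf_cycle G x y h) \<subseteq> carrier G \<times> carrier G"
    unfolding surf_cycle_d4 using d4_supp pts by (rule subset_trans)
  have fin: "finite (supp (surf_cycle G x y h))" unfolding surf_cycle_d4 by (rule d4_fin) simp
  have "bd2 G (surf_cycle G x y h) z = 0" for z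
  proof -
    have "bd2 G (surf_cycle G x y h) z = (\<Sum>i<h. of_bool (?P i = z) - of_bool (?P (Suc i) = z))"
      unfolding bd2_alt surf_cycle_d4 lin4[OF finite_lessThan]
    proof (rule sum.cong[OF refl])
      fix i assume "i \<in> {..<h}"
      then have i: "i < h" by simp
      show "DD G z (?P i, x i) + DD G z (?P i \<otimes> x i, y i) - DD G z (?P i \<otimes> x i \<otimes> y i \<otimes> inv x i, x i) - DD G z (?P (Suc i), y i)
           = of_bool (?P i = z) - of_bool (?P (Suc i) = z)"
        using DD_block[of "?P i" "x i" "y i" z] Pc[of i] c[OF i] i by simp
    qed
    also have "\<dots> = of_bool (?P 0 = z) - of_bool (?P h = z)" by (rule sum_lessThan_telescope')
    also have "\<dots> = 0" using r by simp
    finally show ?thesis .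
  qed
  then show ?thesis using supp fin by (auto simp: cycles2_def chains2_def)
qed

context ext2 begin

lemma lifts_imp_image: assumes ne: "lifts E q h x y \<noteq> {}"
  shows "in_image_H2 E G q (surf_cycle G x y h)"
proof -
  obtain x' y' where p: "(x', y') \<in> lifts E q h x y" using ne by auto
  have x': "\<And>i. i < h \<Longrightarrow> x' i \<in> carrier E \<and> y' i \<in> carrier E"
    and r: "surf_rel E x' y' h = \<one>\<^bsub>E\<^esub>" and qx: "\<And>i. i < h \<Longrightarrow> q (x' i) = x i \<and> q (y' i) = y i"
    using p by (auto simp: lifts_def surf_hom_def PiE_iff)
  let ?c = "surf_cycle E x' y' h"
  have cyc: "?c \<in> cycles2 E" by (rule E.surf_cycle_cycle[OF x' r])
  then have fin: "finite (supp ?c)" by (simp add: cycles2_def chains2_def)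
  have Pc: "\<And>i. i \<le> h \<Longrightarrow> surf_rel E x' y' i \<in> carrier E"
  proof -
    fix i assume i: "i \<le> h"
    show "surf_rel E x' y' i \<in> carrier E"
    proof (rule E.surf_rel_closed)
      fix j assume "j < i" then have "j < h" using i by linarith
      then show "x' j \<in> carrier E \<and> y' j \<in> carrier E" using x' by blast
    qed
  qed
  have qP: "\<And>i. i \<le> h \<Longrightarrow> q (surf_rel E x' y' i) = surf_rel G x y i"
  proof -
    fix i assume i: "i \<le> h"
    have lt: "\<And>j. j < i \<Longrightarrow> j < h" using i by linarith
    have "q (surf_rel E x' y' i) = surf_rel G (\<lambda>j. q (x' j)) (\<lambda>j. q (y' j)) i"
      using lt x' by (intro q_surf_rel) blast
    also have "\<dots> = surf_rel G x y i" using lt qx by (intro surf_rel_cong) blast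
    finally show "q (surf_rel E x' y' i) = surf_rel G x y i" .
  qed
  have push: "push2 q ?c = surf_cycle G x y h"
  proof
    fix z
    have "push2 q ?c z = (\<Sum>p\<in>supp ?c. ?c p * of_bool ((q (fst p), q (snd p)) = z))"
      by (rule push2_alt[OF fin])
    also have "\<dots> = surf_cycle G x y h z"
      unfolding surf_cycle_d4[of E] lin4[OF finite_lessThan]
      unfolding surf_cycle_d4[of G] d4_def
    proof (rule sum.cong[OF refl])
      fix i assume "i \<in> {..<h}"
      then have i: "i < h" and i': "i \<le> h" "Suc i \<le> h" by auto
      have e: "q (surf_rel E x' y' i) = surf_rel G x y i" "q (surf_rel E x' y' (Suc i)) = surf_rel G x y (Suc i)"
        by (rule qP[OF i'(1)], rule qP[OF i'(2)])
      have cc: "surf_rel E x' y' i \<in> carrier E" "x' i \<in> carrier E" "y' i \<in> carrier E"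
        using Pc[OF i'(1)] x'[OF i] by auto
      show "of_bool ((q (fst (surf_rel E x' y' i, x' i)), q (snd (surf_rel E x' y' i, x' i))) = z)
          + of_bool ((q (fst (surf_rel E x' y' i \<otimes>\<^bsub>E\<^esub> x' i, y' i)), q (snd (surf_rel E x' y' i \<otimes>\<^bsub>E\<^esub> x' i, y' i))) = z)
          - of_bool ((q (fst (surf_rel E x' y' i \<otimes>\<^bsub>E\<^esub> x' i \<otimes>\<^bsub>E\<^esub> y' i \<otimes>\<^bsub>E\<^esub> inv\<^bsub>E\<^esub> x' i, x' i)),
                      q (snd (surf_rel E x' y' i \<otimes>\<^bsub>E\<^esub> x' i \<otimes>\<^bsub>E\<^esub> y' i \<otimes>\<^bsub>E\<^esub> inv\<^bsub>E\<^esub> x' i, x' i))) = z)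
          - of_bool ((q (fst (surf_rel E x' y' (Suc i), y' i)), q (snd (surf_rel E x' y' (Suc i), y' i))) = z)
        = of_bool (z = (surf_rel G x y i, x i)) + of_bool (z = (surf_rel G x y i \<otimes>\<^bsub>G\<^esub> x i, y i))
          - of_bool (z = (surf_rel G x y i \<otimes>\<^bsub>G\<^esub> x i \<otimes>\<^bsub>G\<^esub> y i \<otimes>\<^bsub>G\<^esub> inv\<^bsub>G\<^esub> x i, x i))
          - of_bool (z = (surf_rel G x y (Suc i), y i))"
        using cc e qx[OF i] by (simp add: qs eq_commute)
    qed
    finally show "push2 q ?c z = surf_cycle G x y h z" .
  qed
  have e0: "(\<lambda>_. 0 :: int) \<in> chains3 G" by (simp add: chains3_def supp_def)
  have b0: "bd3 G (\<lambda>_. 0) = (\<lambda>_. 0)" by (simp add: bd3_def supp_def)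
  show ?thesis unfolding in_image_H2_def
    using cyc e0 b0 push by (intro bexI[of _ ?c] bexI[of _ "\<lambda>_. 0"]) auto
qed

end

lemma (in comm_group) cocyc_one:
  assumes c: "u1 \<in> carrier G" "u2 \<in> carrier G" "u3 \<in> carrier G" "u4 \<in> carrier G"
    and e: "u1 \<otimes> u2 = u3 \<otimes> u4"
  shows "u3 \<otimes> inv u2 \<otimes> u4 \<otimes> inv u1 = \<one>"
proof -
  have "u3 \<otimes> inv u2 \<otimes> u4 \<otimes> inv u1 = (u3 \<otimes> u4) \<otimes> inv (u1 \<otimes> u2)"
    using c by (simp add: m_ac inv_mult)
  also have "\<dots> = \<one>" using c e by simp
  finally show ?thesis .
qed

lemma (in comm_group) rearr3:
  assumes c: "a \<in> carrier G" "b \<in> carrier G" "d \<in> carrier G"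
  shows "a \<otimes> b \<otimes> inv d = b \<otimes> inv d \<otimes> a"
  using c by (simp add: m_ac)

lemma (in comm_group) finprod_one_if:
  assumes "finite A" "\<And>i. i \<in> A \<Longrightarrow> f i = \<one>"
  shows "finprod G f A = \<one>"
proof -
  have "finprod G f A = finprod G (\<lambda>i. \<one>) A" by (rule finprod_cong') (use assms in auto)
  then show ?thesis by simp
qed

context ext2 begin

definition "QQ = Kg Mod C"

lemma QQ_comm: "comm_group QQ" unfolding QQ_def by (rule Q_comm)
lemma QQ_group: "group QQ" unfolding QQ_def by (rule Q_group)

lemma clsQ_carr: "k \<in> K \<Longrightarrow> cls k \<in> carrier QQ" unfolding QQ_def by (rule cls_carr)
lemma clsQ_mult: "a \<in> K \<Longrightarrow> b \<in> K \<Longrightarrow> cls (a \<otimes>\<^bsub>E\<^esub> b) = cls a \<otimes>\<^bsub>QQ\<^esub> cls b"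
  unfolding QQ_def by (rule cls_mult)
lemma clsQ_inv: "a \<in> K \<Longrightarrow> cls (inv\<^bsub>E\<^esub> a) = inv\<^bsub>QQ\<^esub> cls a"
  unfolding QQ_def by (rule cls_inv)
lemma clsQ_one: "a \<in> K \<Longrightarrow> cls a = \<one>\<^bsub>QQ\<^esub> \<longleftrightarrow> a \<in> C"
  unfolding QQ_def by (rule cls_eq_one)

definition "wk a b = sec a \<otimes>\<^bsub>E\<^esub> sec b \<otimes>\<^bsub>E\<^esub> inv\<^bsub>E\<^esub> (sec (a \<otimes>\<^bsub>G\<^esub> b))"

lemma wk_K: "a \<in> carrier G \<Longrightarrow> b \<in> carrier G \<Longrightarrow> wk a b \<in> K"
  by (simp add: wk_def inK qs sec_carr q_sec)

definition "ww p = (if p \<in> carrier G \<times> carrier G then cls (wk (fst p) (snd p)) else \<one>\<^bsub>QQ\<^esub>)"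

lemma ww_carr: "ww p \<in> carrier QQ"
  by (auto simp: ww_def clsQ_carr wk_K group.is_monoid[OF QQ_group] monoid.one_closed)

lemma ww_in: "a \<in> carrier G \<Longrightarrow> b \<in> carrier G \<Longrightarrow> ww (a, b) = cls (wk a b)"
  by (simp add: ww_def)

lemma cocycle_E:
  assumes c: "a \<in> carrier G" "b \<in> carrier G" "c \<in> carrier G"
  shows "wk a b \<otimes>\<^bsub>E\<^esub> wk (a \<otimes>\<^bsub>G\<^esub> b) c = cj (sec a) (wk b c) \<otimes>\<^bsub>E\<^esub> wk a (b \<otimes>\<^bsub>G\<^esub> c)"
proof -
  have as: "a \<otimes>\<^bsub>G\<^esub> b \<otimes>\<^bsub>G\<^esub> c = a \<otimes>\<^bsub>G\<^esub> (b \<otimes>\<^bsub>G\<^esub> c)" using c by (simp add: G.m_assoc)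
  have sc: "sec a \<in> carrier E" "sec b \<in> carrier E" "sec c \<in> carrier E" "sec (a \<otimes>\<^bsub>G\<^esub> b) \<in> carrier E"
    "sec (b \<otimes>\<^bsub>G\<^esub> c) \<in> carrier E" "sec (a \<otimes>\<^bsub>G\<^esub> (b \<otimes>\<^bsub>G\<^esub> c)) \<in> carrier E"
    using c by (auto intro!: sec_carr)
  show ?thesis unfolding wk_def cj_def as using sc by (simp add: gs)
qed

lemma cocycle_Q:
  assumes c: "a \<in> carrier G" "b \<in> carrier G" "c \<in> carrier G"
  shows "ww (b, c) \<otimes>\<^bsub>QQ\<^esub> inv\<^bsub>QQ\<^esub> (ww (a \<otimes>\<^bsub>G\<^esub> b, c)) \<otimes>\<^bsub>QQ\<^esub> ww (a, b \<otimes>\<^bsub>G\<^esub> c) \<otimes>\<^bsub>QQ\<^esub> inv\<^bsub>QQ\<^esub> (ww (a, b)) = \<one>\<^bsub>QQ\<^esub>"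
proof -
  have k: "wk a b \<in> K" "wk (a \<otimes>\<^bsub>G\<^esub> b) c \<in> K" "wk b c \<in> K" "wk a (b \<otimes>\<^bsub>G\<^esub> c) \<in> K"
    using c by (auto intro!: wk_K)
  have "cls (wk a b) \<otimes>\<^bsub>QQ\<^esub> cls (wk (a \<otimes>\<^bsub>G\<^esub> b) c) = cls (wk b c) \<otimes>\<^bsub>QQ\<^esub> cls (wk a (b \<otimes>\<^bsub>G\<^esub> c))"
  proof -
    have "cls (wk a b) \<otimes>\<^bsub>QQ\<^esub> cls (wk (a \<otimes>\<^bsub>G\<^esub> b) c) = cls (wk a b \<otimes>\<^bsub>E\<^esub> wk (a \<otimes>\<^bsub>G\<^esub> b) c)"
      using k by (simp add: clsQ_mult)
    also have "\<dots> = cls (cj (sec a) (wk b c) \<otimes>\<^bsub>E\<^esub> wk a (b \<otimes>\<^bsub>G\<^esub> c))" using cocycle_E[OF c] by simp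
    also have "\<dots> = cls (cj (sec a) (wk b c)) \<otimes>\<^bsub>QQ\<^esub> cls (wk a (b \<otimes>\<^bsub>G\<^esub> c))"
      using k c sec_carr by (simp add: clsQ_mult cj_K)
    also have "cls (cj (sec a) (wk b c)) = cls (wk b c)" using k c sec_carr by (simp add: cls_cj)
    finally show ?thesis .
  qed
  then show ?thesis using c k
    by (simp add: ww_in comm_group.cocyc_one[OF QQ_comm] clsQ_carr)
qed

lemma Phi_bd3: assumes e: "e \<in> chains3 G"
  shows "Phi QQ ww (bd3 G e) = \<one>\<^bsub>QQ\<^esub>"
proof -
  interpret Qc: comm_group QQ by (rule QQ_comm)
  have fe: "finite (supp e)" and se: "supp e \<subseteq> carrier G \<times> carrier G \<times> carrier G"
    using e by (auto simp: chains3_def)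
  define F :: "'a \<times> 'a \<times> 'a \<Rightarrow> 'a \<times> 'a \<Rightarrow> int" where "F t = (\<lambda>z. case t of (a, b, c) \<Rightarrow>
         of_bool ((b, c) = z) - of_bool ((a \<otimes>\<^bsub>G\<^esub> b, c) = z)
       + of_bool ((a, b \<otimes>\<^bsub>G\<^esub> c) = z) - of_bool ((a, b) = z))" for t
  have bd: "bd3 G e = (\<lambda>z. \<Sum>t\<in>supp e. e t * F t z)" by (simp add: bd3_def F_def)
  have fF: "finite (supp (F t))" for t
  proof -
    obtain a b c where tt: "t = (a, b, c)" by (cases t) auto
    show ?thesis
      by (rule finite_subset[of _ "{(b,c), (a \<otimes>\<^bsub>G\<^esub> b, c), (a, b \<otimes>\<^bsub>G\<^esub> c), (a, b)}"])
         (auto simp: supp_def F_def tt)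
  qed
  have fF2: "finite (supp (\<lambda>z. e t * F t z))" for t
    by (rule finite_subset[OF _ fF[of t]]) (auto simp: supp_def)
  have "Phi QQ ww (bd3 G e) = (\<Otimes>\<^bsub>QQ\<^esub>t\<in>supp e. Phi QQ ww (\<lambda>z. e t * F t z))"
    unfolding bd by (rule Qc.Phi_sum[where w=ww, OF ww_carr fe fF2])
  also have "\<dots> = \<one>\<^bsub>QQ\<^esub>"
  proof (rule Qc.finprod_one_if[OF fe])
    fix t assume t: "t \<in> supp e"
    obtain a b c where tt: "t = (a, b, c)" by (cases t) auto
    have c: "a \<in> carrier G" "b \<in> carrier G" "c \<in> carrier G" using se t tt by auto
    have Ft: "F t = (\<lambda>z. of_bool ((b, c) = z) - of_bool ((a \<otimes>\<^bsub>G\<^esub> b, c) = z)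
       + of_bool ((a, b \<otimes>\<^bsub>G\<^esub> c) = z) - of_bool ((a, b) = z))" by (simp add: F_def tt)
    have f1: "finite (supp (\<lambda>z. of_bool ((b, c) = z) - of_bool ((a \<otimes>\<^bsub>G\<^esub> b, c) = z) :: int))"
      by (rule finite_subset[of _ "{(b,c), (a \<otimes>\<^bsub>G\<^esub> b, c)}"]) (auto simp: supp_def)
    have f2: "finite (supp (\<lambda>z. of_bool ((b, c) = z) - of_bool ((a \<otimes>\<^bsub>G\<^esub> b, c) = z)
       + of_bool ((a, b \<otimes>\<^bsub>G\<^esub> c) = z) :: int))"
      by (rule finite_subset[of _ "{(b,c), (a \<otimes>\<^bsub>G\<^esub> b, c), (a, b \<otimes>\<^bsub>G\<^esub> c)}"]) (auto simp: supp_def)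
    have "Phi QQ ww (F t) = ww (b, c) \<otimes>\<^bsub>QQ\<^esub> inv\<^bsub>QQ\<^esub> (ww (a \<otimes>\<^bsub>G\<^esub> b, c)) \<otimes>\<^bsub>QQ\<^esub> ww (a, b \<otimes>\<^bsub>G\<^esub> c) \<otimes>\<^bsub>QQ\<^esub> inv\<^bsub>QQ\<^esub> (ww (a, b))"
      unfolding Ft
      by (simp only: Qc.Phi_diff[where w=ww, OF ww_carr f2 Qc.supp_delta_fin']
           Qc.Phi_add[where w=ww, OF ww_carr f1 Qc.supp_delta_fin']
           Qc.Phi_diff[where w=ww, OF ww_carr Qc.supp_delta_fin' Qc.supp_delta_fin']
           Qc.Phi_delta'[where w=ww, OF ww_carr])
    also have "\<dots> = \<one>\<^bsub>QQ\<^esub>" by (rule cocycle_Q[OF c])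
    finally have "Phi QQ ww (F t) = \<one>\<^bsub>QQ\<^esub>" .
    then show "Phi QQ ww (\<lambda>z. e t * F t z) = \<one>\<^bsub>QQ\<^esub>"
      using Qc.Phi_scale[where w=ww, OF ww_carr fF[of t], of "e t"] by simp
  qed
  finally show ?thesis .
qed

end

context ext2 begin

definition "al g = inv\<^bsub>E\<^esub> g \<otimes>\<^bsub>E\<^esub> sec (q g)"
definition "ka g = (if g \<in> carrier E then cls (al g) else \<one>\<^bsub>QQ\<^esub>)"

lemma al_K: "g \<in> carrier E \<Longrightarrow> al g \<in> K"
  by (simp add: al_def inK qs sec_carr q_sec)

lemma ka_carr: "ka g \<in> carrier QQ"
  by (auto simp: ka_def clsQ_carr al_K group.is_monoid[OF QQ_group] monoid.one_closed)

lemma wk_q: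
  assumes c: "a \<in> carrier E" "b \<in> carrier E"
  shows "wk (q a) (q b) = cj a (al a) \<otimes>\<^bsub>E\<^esub> cj (a \<otimes>\<^bsub>E\<^esub> b) (al b \<otimes>\<^bsub>E\<^esub> inv\<^bsub>E\<^esub> (al (a \<otimes>\<^bsub>E\<^esub> b)))"
proof -
  have s: "sec (q a) \<in> carrier E" "sec (q b) \<in> carrier E" "sec (q (a \<otimes>\<^bsub>E\<^esub> b)) \<in> carrier E"
    using c by (auto intro!: sec_carr q_carr)
  have e: "q a \<otimes>\<^bsub>G\<^esub> q b = q (a \<otimes>\<^bsub>E\<^esub> b)" using c by (simp add: q_mult)
  show ?thesis unfolding wk_def e al_def cj_def using c s by (simp add: gs)
qed

lemma ww_q:
  assumes c: "a \<in> carrier E" "b \<in> carrier E"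
  shows "ww (q a, q b) = ka b \<otimes>\<^bsub>QQ\<^esub> inv\<^bsub>QQ\<^esub> (ka (a \<otimes>\<^bsub>E\<^esub> b)) \<otimes>\<^bsub>QQ\<^esub> ka a"
proof -
  have k: "al a \<in> K" "al b \<in> K" "al (a \<otimes>\<^bsub>E\<^esub> b) \<in> K" using c by (auto intro!: al_K)
  have ab: "a \<otimes>\<^bsub>E\<^esub> b \<in> carrier E" using c by simp
  have "ww (q a, q b) = cls (wk (q a) (q b))" using c by (simp add: ww_in q_carr)
  also have "\<dots> = cls (cj a (al a)) \<otimes>\<^bsub>QQ\<^esub> cls (cj (a \<otimes>\<^bsub>E\<^esub> b) (al b \<otimes>\<^bsub>E\<^esub> inv\<^bsub>E\<^esub> (al (a \<otimes>\<^bsub>E\<^esub> b))))"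
    unfolding wk_q[OF c] using c k ab by (intro clsQ_mult) (auto intro!: cj_K K_mult K_inv)
  also have "\<dots> = cls (al a) \<otimes>\<^bsub>QQ\<^esub> (cls (al b) \<otimes>\<^bsub>QQ\<^esub> inv\<^bsub>QQ\<^esub> (cls (al (a \<otimes>\<^bsub>E\<^esub> b))))"
    using c k ab by (simp add: cls_cj K_mult K_inv clsQ_mult clsQ_inv)
  also have "\<dots> = ka b \<otimes>\<^bsub>QQ\<^esub> inv\<^bsub>QQ\<^esub> (ka (a \<otimes>\<^bsub>E\<^esub> b)) \<otimes>\<^bsub>QQ\<^esub> ka a"
    using c ab k clsQ_carr comm_group.rearr3[OF QQ_comm, of "cls (al a)" "cls (al b)" "cls (al (a \<otimes>\<^bsub>E\<^esub> b))"]
    by (simp add: ka_def group.is_monoid[OF QQ_group] monoid.m_assoc group.inv_closed[OF QQ_group])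
  finally show ?thesis .
qed

lemma push_fun: "finite (supp c) \<Longrightarrow> push2 q c = (\<lambda>z. \<Sum>p\<in>supp c. c p * of_bool ((q (fst p), q (snd p)) = z))"
  by (rule ext) (rule push2_alt)

lemma Phi_push: assumes cy: "c \<in> cycles2 E"
  shows "Phi QQ ww (push2 q c) = \<one>\<^bsub>QQ\<^esub>"
proof -
  interpret Qc: comm_group QQ by (rule QQ_comm)
  have fc: "finite (supp c)" and sc: "supp c \<subseteq> carrier E \<times> carrier E" and b0: "bd2 E c = (\<lambda>_. 0)"
    using cy by (auto simp: cycles2_def chains2_def)
  have fd: "finite (supp (\<lambda>z. c p * of_bool ((q (fst p), q (snd p)) = z)))" for p
    by (rule finite_subset[of _ "{(q (fst p), q (snd p))}"]) (auto simp: supp_def)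
  have fD: "finite (supp (\<lambda>z. DD E z p))" for p
    by (rule finite_subset[of _ "{snd p, fst p \<otimes>\<^bsub>E\<^esub> snd p, fst p}"]) (auto simp: supp_def DD_def)
  have fD2: "finite (supp (\<lambda>z. c p * DD E z p))" for p
    by (rule finite_subset[OF _ fD[of p]]) (auto simp: supp_def)
  have "Phi QQ ww (push2 q c) = (\<Otimes>\<^bsub>QQ\<^esub>p\<in>supp c. Phi QQ ww (\<lambda>z. c p * of_bool ((q (fst p), q (snd p)) = z)))"
    unfolding push_fun[OF fc] by (rule Qc.Phi_sum[where w=ww, OF ww_carr fc fd])
  also have "\<dots> = (\<Otimes>\<^bsub>QQ\<^esub>p\<in>supp c. Phi QQ ka (\<lambda>z. c p * DD E z p))"
  proof (rule Qc.finprod_cong')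
    fix p assume p: "p \<in> supp c"
    then have pc: "fst p \<in> carrier E" "snd p \<in> carrier E" using sc by auto
    have f1: "finite (supp (\<lambda>z. of_bool (snd p = z) - of_bool (fst p \<otimes>\<^bsub>E\<^esub> snd p = z) :: int))"
      by (rule finite_subset[of _ "{snd p, fst p \<otimes>\<^bsub>E\<^esub> snd p}"]) (auto simp: supp_def)
    have "Phi QQ ka (\<lambda>z. DD E z p) = ka (snd p) \<otimes>\<^bsub>QQ\<^esub> inv\<^bsub>QQ\<^esub> (ka (fst p \<otimes>\<^bsub>E\<^esub> snd p)) \<otimes>\<^bsub>QQ\<^esub> ka (fst p)"
      unfolding DD_def
      by (simp only: Qc.Phi_add[where w=ka, OF ka_carr f1 Qc.supp_delta_fin']
           Qc.Phi_diff[where w=ka, OF ka_carr Qc.supp_delta_fin' Qc.supp_delta_fin']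
           Qc.Phi_delta'[where w=ka, OF ka_carr])
    also have "\<dots> = ww (q (fst p), q (snd p))" using ww_q[OF pc] by simp
    also have "\<dots> = Phi QQ ww (\<lambda>z. of_bool ((q (fst p), q (snd p)) = z))"
      by (rule Qc.Phi_delta'[where w=ww, OF ww_carr, symmetric])
    finally have e: "Phi QQ ww (\<lambda>z. of_bool ((q (fst p), q (snd p)) = z)) = Phi QQ ka (\<lambda>z. DD E z p)" ..
    show "Phi QQ ww (\<lambda>z. c p * of_bool ((q (fst p), q (snd p)) = z)) = Phi QQ ka (\<lambda>z. c p * DD E z p)"
      using Qc.Phi_scale[where w=ww, OF ww_carr Qc.supp_delta_fin', of "c p" "(q (fst p), q (snd p))"]
        Qc.Phi_scale[where w=ka, OF ka_carr fD[of p], of "c p"] e by simp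
  next
    show "(\<lambda>p. Phi QQ ka (\<lambda>z. c p * DD E z p)) \<in> supp c \<rightarrow> carrier QQ"
      using Qc.Phi_closed[where w=ka, OF ka_carr] by blast
  qed simp
  also have "\<dots> = Phi QQ ka (\<lambda>z. \<Sum>p\<in>supp c. c p * DD E z p)"
    by (rule Qc.Phi_sum[where w=ka, OF ka_carr fc fD2, symmetric])
  also have "(\<lambda>z. \<Sum>p\<in>supp c. c p * DD E z p) = bd2 E c" by (rule ext) (simp add: bd2_alt)
  also have "Phi QQ ka (bd2 E c) = \<one>\<^bsub>QQ\<^esub>" using b0 by (simp add: Qc.Phi_zero)
  finally show ?thesis .
qed

end

context ext2 begin

definition "blkE i = sec (PG i) \<otimes>\<^bsub>E\<^esub> grp_comm E (x0 i) (y0 i) \<otimes>\<^bsub>E\<^esub> inv\<^bsub>E\<^esub> (sec (PG (Suc i)))"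
definition "TE n = sec \<one>\<^bsub>G\<^esub> \<otimes>\<^bsub>E\<^esub> Rn n \<otimes>\<^bsub>E\<^esub> inv\<^bsub>E\<^esub> (sec (PG n))"

lemma PG_Suc: "PG (Suc i) = PG i \<otimes>\<^bsub>G\<^esub> grp_comm G (x i) (y i)"
  by (simp add: PG_def)

lemma blk_eq: assumes i: "i < h"
  shows "wk (PG i) (x i) \<otimes>\<^bsub>E\<^esub> wk (PG i \<otimes>\<^bsub>G\<^esub> x i) (y i)
     \<otimes>\<^bsub>E\<^esub> inv\<^bsub>E\<^esub> (wk (PG i \<otimes>\<^bsub>G\<^esub> x i \<otimes>\<^bsub>G\<^esub> y i \<otimes>\<^bsub>G\<^esub> inv\<^bsub>G\<^esub> x i) (x i))
     \<otimes>\<^bsub>E\<^esub> inv\<^bsub>E\<^esub> (wk (PG (Suc i)) (y i)) = blkE i"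
proof -
  have c: "PG i \<in> carrier G" "x i \<in> carrier G" "y i \<in> carrier G" "PG (Suc i) \<in> carrier G"
    using PG_carr[of i] PG_carr[of "Suc i"] x_carr[OF i] y_carr[OF i] i by auto
  have g1: "PG i \<otimes>\<^bsub>G\<^esub> x i \<otimes>\<^bsub>G\<^esub> y i \<otimes>\<^bsub>G\<^esub> inv\<^bsub>G\<^esub> x i \<otimes>\<^bsub>G\<^esub> x i = PG i \<otimes>\<^bsub>G\<^esub> x i \<otimes>\<^bsub>G\<^esub> y i"
    using c by (simp add: G.m_assoc)
  have g2: "PG (Suc i) \<otimes>\<^bsub>G\<^esub> y i = PG i \<otimes>\<^bsub>G\<^esub> x i \<otimes>\<^bsub>G\<^esub> y i \<otimes>\<^bsub>G\<^esub> inv\<^bsub>G\<^esub> x i"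
    using c by (simp add: PG_Suc G.m_assoc grp_comm_def)
  have s: "sec (PG i) \<in> carrier E" "sec (x i) \<in> carrier E" "sec (y i) \<in> carrier E"
    "sec (PG i \<otimes>\<^bsub>G\<^esub> x i) \<in> carrier E" "sec (PG i \<otimes>\<^bsub>G\<^esub> x i \<otimes>\<^bsub>G\<^esub> y i) \<in> carrier E"
    "sec (PG i \<otimes>\<^bsub>G\<^esub> x i \<otimes>\<^bsub>G\<^esub> y i \<otimes>\<^bsub>G\<^esub> inv\<^bsub>G\<^esub> x i) \<in> carrier E" "sec (PG (Suc i)) \<in> carrier E"
    using c by (auto intro!: sec_carr)
  show ?thesis unfolding wk_def g1 g2 blkE_def x0_def y0_def grp_comm_def
    using s by (simp add: gs)
qed

lemma blkE_K: "i < h \<Longrightarrow> blkE i \<in> K"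
proof -
  assume i: "i < h"
  have c: "PG i \<in> carrier G" "x i \<in> carrier G" "y i \<in> carrier G" "PG (Suc i) \<in> carrier G"
    using PG_carr[of i] PG_carr[of "Suc i"] x_carr[OF i] y_carr[OF i] i by auto
  have "q (grp_comm E (x0 i) (y0 i)) = grp_comm G (x i) (y i)"
    using i by (simp add: q_grp_comm x0_carr y0_carr q_x0 q_y0)
  then show ?thesis using c x0_carr[OF i] y0_carr[OF i]
    by (simp add: blkE_def inK qs sec_carr q_sec E.grp_comm_closed G.grp_comm_closed PG_Suc G.m_assoc)
qed

lemma TE_K: "n \<le> h \<Longrightarrow> TE n \<in> K"
  using q_Rn[of n] Rn_carr[of n] PG_carr[of n]
  by (simp add: TE_def inK qs sec_carr q_sec)

lemma clsQ_one1: "cls \<one>\<^bsub>E\<^esub> = \<one>\<^bsub>QQ\<^esub>" by (simp only: QQ_def cls_one)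

interpretation Qc: comm_group QQ by (rule QQ_comm)

lemma tele: "n \<le> h \<Longrightarrow> finprod QQ (\<lambda>i. cls (blkE i)) {..<n} = cls (TE n)"
proof (induction n)
  case 0
  have "TE 0 = \<one>\<^bsub>E\<^esub>" by (simp add: TE_def Rn_def PG_def sec_carr)
  then show ?case by (simp only: clsQ_one1 lessThan_0 Qc.finprod_empty)
next
  case (Suc n)
  then have n: "n < h" by simp
  have ih: "finprod QQ (\<lambda>i. cls (blkE i)) {..<n} = cls (TE n)" using Suc n by simp
  have bk: "\<And>i. i \<in> {..<n} \<Longrightarrow> cls (blkE i) \<in> carrier QQ" using n by (auto intro!: clsQ_carr blkE_K)
  have "finprod QQ (\<lambda>i. cls (blkE i)) {..<Suc n} = cls (blkE n) \<otimes>\<^bsub>QQ\<^esub> finprod QQ (\<lambda>i. cls (blkE i)) {..<n}"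
    unfolding lessThan_Suc using bk blkE_K[OF n] clsQ_carr by (subst Qc.finprod_insert) auto
  also have "\<dots> = cls (TE n) \<otimes>\<^bsub>QQ\<^esub> cls (blkE n)"
    using ih Qc.m_comm clsQ_carr blkE_K[OF n] TE_K[of n] n by simp
  also have "\<dots> = cls (TE n \<otimes>\<^bsub>E\<^esub> blkE n)"
    using blkE_K[OF n] TE_K[of n] n by (simp add: clsQ_mult)
  also have "TE n \<otimes>\<^bsub>E\<^esub> blkE n = TE (Suc n)"
    using Rn_carr[of n] PG_carr[of n] PG_carr[of "Suc n"] x0_carr[OF n] y0_carr[OF n] n
    by (simp add: TE_def blkE_def Rn_def sec_carr gs E.grp_comm_closed E.surf_rel_closed)
  finally show ?case .
qed

lemma Phi_z: "Phi QQ ww (surf_cycle G x y h) = cls (Rn h)"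
proof -
  have "Phi QQ ww (surf_cycle G x y h) =
     (\<Otimes>\<^bsub>QQ\<^esub>i\<in>{..<h}. ww (PG i, x i) \<otimes>\<^bsub>QQ\<^esub> ww (PG i \<otimes>\<^bsub>G\<^esub> x i, y i)
        \<otimes>\<^bsub>QQ\<^esub> inv\<^bsub>QQ\<^esub> (ww (PG i \<otimes>\<^bsub>G\<^esub> x i \<otimes>\<^bsub>G\<^esub> y i \<otimes>\<^bsub>G\<^esub> inv\<^bsub>G\<^esub> x i, x i))
        \<otimes>\<^bsub>QQ\<^esub> inv\<^bsub>QQ\<^esub> (ww (PG (Suc i), y i)))"
    unfolding surf_cycle_d4 PG_def[symmetric] by (rule Qc.Phi_d4[where w=ww, OF ww_carr finite_lessThan])
  also have "\<dots> = finprod QQ (\<lambda>i. cls (blkE i)) {..<h}"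
  proof (rule Qc.finprod_cong')
    fix i assume "i \<in> {..<h}"
    then have i: "i < h" by simp
    have c: "PG i \<in> carrier G" "x i \<in> carrier G" "y i \<in> carrier G" "PG (Suc i) \<in> carrier G"
      using PG_carr[of i] PG_carr[of "Suc i"] x_carr[OF i] y_carr[OF i] i by auto
    have k: "wk (PG i) (x i) \<in> K" "wk (PG i \<otimes>\<^bsub>G\<^esub> x i) (y i) \<in> K"
      "wk (PG i \<otimes>\<^bsub>G\<^esub> x i \<otimes>\<^bsub>G\<^esub> y i \<otimes>\<^bsub>G\<^esub> inv\<^bsub>G\<^esub> x i) (x i) \<in> K" "wk (PG (Suc i)) (y i) \<in> K"
      using c by (auto intro!: wk_K)
    have "cls (blkE i) = ww (PG i, x i) \<otimes>\<^bsub>QQ\<^esub> ww (PG i \<otimes>\<^bsub>G\<^esub> x i, y i)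
        \<otimes>\<^bsub>QQ\<^esub> inv\<^bsub>QQ\<^esub> (ww (PG i \<otimes>\<^bsub>G\<^esub> x i \<otimes>\<^bsub>G\<^esub> y i \<otimes>\<^bsub>G\<^esub> inv\<^bsub>G\<^esub> x i, x i))
        \<otimes>\<^bsub>QQ\<^esub> inv\<^bsub>QQ\<^esub> (ww (PG (Suc i), y i))"
      unfolding blk_eq[OF i, symmetric] using c k
      by (simp add: ww_in clsQ_mult clsQ_inv K_mult K_inv)
    then show "ww (PG i, x i) \<otimes>\<^bsub>QQ\<^esub> ww (PG i \<otimes>\<^bsub>G\<^esub> x i, y i)
        \<otimes>\<^bsub>QQ\<^esub> inv\<^bsub>QQ\<^esub> (ww (PG i \<otimes>\<^bsub>G\<^esub> x i \<otimes>\<^bsub>G\<^esub> y i \<otimes>\<^bsub>G\<^esub> inv\<^bsub>G\<^esub> x i, x i))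
        \<otimes>\<^bsub>QQ\<^esub> inv\<^bsub>QQ\<^esub> (ww (PG (Suc i), y i)) = cls (blkE i)" by simp
  next
    show "(\<lambda>i. cls (blkE i)) \<in> {..<h} \<rightarrow> carrier QQ" using blkE_K clsQ_carr by auto
  qed simp
  also have "\<dots> = cls (TE h)" by (rule tele) simp
  also have "TE h = sec \<one>\<^bsub>G\<^esub> \<otimes>\<^bsub>E\<^esub> Rn h \<otimes>\<^bsub>E\<^esub> inv\<^bsub>E\<^esub> (sec \<one>\<^bsub>G\<^esub>)"
    using rel by (simp add: TE_def PG_def)
  also have "cls \<dots> = cls (Rn h)" using R0_K sec_carr by (simp add: cls_conj)
  finally show ?thesis .
qed

lemma push_supp_fin: "finite (supp c) \<Longrightarrow> finite (supp (push2 q c))"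
proof -
  assume fc: "finite (supp c)"
  have "supp (push2 q c) \<subseteq> (\<lambda>p. (q (fst p), q (snd p))) ` supp c"
  proof
    fix z assume "z \<in> supp (push2 q c)"
    then have "push2 q c z \<noteq> 0" by (simp add: supp_def)
    then have "{p \<in> supp c. (q (fst p), q (snd p)) = z} \<noteq> {}"
    proof (rule contrapos_nn)
      assume "{p \<in> supp c. (q (fst p), q (snd p)) = z} = {}"
      then show "push2 q c z = 0" unfolding push2_def by (simp only: sum.empty)
    qed
    then show "z \<in> (\<lambda>p. (q (fst p), q (snd p))) ` supp c" by blast
  qed
  then show ?thesis using fc finite_subset by blast
qed

lemma image_imp_C: assumes im: "in_image_H2 E G q (surf_cycle G x y h)"
  shows "Rn h \<in> C"
proof -
  let ?z = "surf_cycle G x y h"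
  obtain c e where c: "c \<in> cycles2 E" and e: "e \<in> chains3 G"
    and eq: "(\<lambda>p. ?z p - push2 q c p) = bd3 G e"
    using im by (auto simp: in_image_H2_def)
  have fz: "finite (supp ?z)" unfolding surf_cycle_d4 by (rule d4_fin) simp
  have fc: "finite (supp c)" using c unfolding cycles2_def chains2_def by blast
  have fp: "finite (supp (push2 q c))" by (rule push_supp_fin[OF fc])
  have sd: "supp (\<lambda>p. ?z p - push2 q c p) \<subseteq> supp ?z \<union> supp (push2 q c)"
    unfolding supp_def by auto
  have fd: "finite (supp (\<lambda>p. ?z p - push2 q c p))"
    by (rule finite_subset[OF sd]) (rule finite_UnI[OF fz fp])
  have "?z = (\<lambda>p. (?z p - push2 q c p) + push2 q c p)" by simp
  then have "Phi QQ ww ?z = Phi QQ ww (\<lambda>p. ?z p - push2 q c p) \<otimes>\<^bsub>QQ\<^esub> Phi QQ ww (push2 q c)"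
    using Qc.Phi_add[where w=ww, OF ww_carr fd fp] by metis
  also have "\<dots> = \<one>\<^bsub>QQ\<^esub>" unfolding eq Phi_bd3[OF e] Phi_push[OF c] by simp
  finally have "cls (Rn h) = \<one>\<^bsub>QQ\<^esub>" using Phi_z by simp
  then show ?thesis using clsQ_one R0_K by blast
qed

end


theorem theorem3p1:
  fixes G' :: "('b, 'n) monoid_scheme" and G :: "('a, 'm) monoid_scheme"
    and q :: "'b \<Rightarrow> 'a" and h :: nat and x y :: "nat \<Rightarrow> 'a"
  assumes "group G'" and "group G"
    and "q \<in> hom G' G" and "q ` carrier G' = carrier G"
    and "finite (kernel G' G q)"
    and "comm_group (G'\<lparr>carrier := kernel G' G q\<rparr>)"
    and "h \<ge> 1"
    and "surf_epi G h x y"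
  shows "(lifts G' q h x y \<noteq> {} \<longleftrightarrow> in_image_H2 G' G q (surf_cycle G x y h))
       \<and> (lifts G' q h x y \<noteq> {} \<longrightarrow>
           real (card (lifts G' q h x y))
             = real (card (kernel G' G q)) ^ (2 * h)
               / real (card (comm_subgroup G' (kernel G' G q))))"
proof -
  have e1: "ext G' G q"
    by (rule ext.intro) (use assms in \<open>auto simp: ext_axioms_def\<close>)
  have e2: "ext2 G' G q h x y"
    by (rule ext2.intro[OF e1]) (use assms in \<open>auto simp: ext2_axioms_def\<close>)
  interpret X: ext2 G' G q h x y by (rule e2)
  show ?thesis
    using X.lifts_imp_image X.image_imp_C X.lifts_iff_C X.count by blast
qed

end
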